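(* Let $n\ge 2$. Then: (i) for all $\alpha\in\dot\Delta$, $r_\alpha(\mathcal S_n)\subset\mathcal S_n\cup\dot{\mathcal S}'_{n-1}$; (ii) for all $\alpha\in\dot\Delta$, $r_\alpha(\mathcal S_n\setminus\dot{\mathcal S}_n)\subset\mathcal S_n$, and for each $x\in\mathcal S_n\setminus\dot{\mathcal S}_n$ there exists $\alpha\in\dot\Delta$ with $r_\alpha(x)\in\dot{\mathcal S}_n$; (iii) for each $x\in\dot{\mathcal S}_n$ there are exactly three distinct reflections $r_\alpha$ with $\alpha\in\dot\Delta$ such that $r_\alpha(x)\in\dot{\mathcal S}'_{n-1}$. (The analogous statements with $\Delta,\mathcal S,\dot{\mathcal S}$ and $\Delta',\mathcal S',\dot{\mathcal S}'$ interchanged also hold.)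
   Context: Let $\tau=(1+\sqrt5)/2$, $\tau'=(1-\sqrt5)/2$. Let $\Delta\subset\mathbb{R}^4$ be the set of 120 vectors consisting of: the 8 vectors obtained from $(\pm1,0,0,0)$ by permuting coordinates; the 16 vectors $\frac12(\pm1,\pm1,\pm1,\pm1)$; and the 96 vectors obtained from $\frac12(0,\pm1,\pm\tau',\pm\tau)$ (all sign choices) by even permutations of the coordinates. Let $\Delta'$ be the image of $\Delta$ under the Galois conjugation $\tau\leftrightarrow\tau'$ applied to each coordinate. Put $K=\Delta\cap\Delta'$, $\dot\Delta=\Delta\setminus K$, $\dot\Delta'=\Delta'\setminus K$. For a unit vector $a$, $r_a(x)=x-2(x\cdot a)a$. Let $\mathbb F_4=\mathbb{Z}[\tau]/2\mathbb{Z}[\tau]$ and for $y\in\mathbb{Z}[\tau]^4$ let $\bar y\in\mathbb F_4^4$ be its coordinatewise reduction. Let $A\subset\mathbb F_4^4$ be the $\mathbb F_4$-span of $(\bar1,\bar1,\bar1,\bar1)$ and $(\bar0,\bar1,\bar{\tau'},\bar\tau)$, $A'$ the span of $(\bar1,\bar1,\bar1,\bar1)$ and $(\bar0,\bar1,\bar\tau,\bar{\tau'})$, $\mathring A=A\setminus\{0\}$, $\mathring A'=A'\setminus\{0\}$. Let $\dot A$ be the 12 vectors obtained from $(\bar0,\bar1,\bar{\tau'},\bar\tau)$ by even permutations of coordinates and $\dot A'$ those obtained by odd permutations. For $n\ge1$: $\mathcal S_n=\{x\in2^{-n}\mathbb{Z}[\tau]^4: x\cdot x=1,\ \overline{2^nx}\in\mathring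 A\}$, $\dot{\mathcal S}_n=\{x\in2^{-n}\mathbb{Z}[\tau]^4: x\cdot x=1,\ \overline{2^nx}\in\dot A\}$, and $\mathcal S'_n,\dot{\mathcal S}'_n$ likewise with $\mathring A',\dot A'$. *)

theory Defs
  imports "HOL-Analysis.Analysis" "HOL-Combinatorics.Permutations"
begin

definition tau :: real where "tau = (1 + sqrt 5) / 2"
definition tau' :: real where "tau' = (1 - sqrt 5) / 2"

definition ZT :: "real set" where
  "ZT = {of_int a + of_int b * tau | a b. True}"

definition permv :: "(4 \<Rightarrow> 4) \<Rightarrow> real^4 \<Rightarrow> real^4" where
  "permv p v = (\<chi> j. v $ p j)"

definition evenperms :: "(4 \<Rightarrow> 4) set" where
  "evenperms = {p. p permutes UNIV \<and> evenperm p}"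
definition oddperms :: "(4 \<Rightarrow> 4) set" where
  "oddperms = {p. p permutes UNIV \<and> \<not> evenperm p}"

definition DeltaP :: "real \<Rightarrow> real \<Rightarrow> (real^4) set" where
  "DeltaP t t' =
     {v. \<exists>i s. (s = 1 \<or> s = -1) \<and> v = (\<chi> j. if j = i then s else 0)}
   \<union> {v. \<forall>j. v $ j = 1/2 \<or> v $ j = -1/2}
   \<union> {permv p ((1/2) *\<^sub>R vector [0, s1, s2 * t', s3 * t]) | p s1 s2 s3.
        p \<in> evenperms \<and> s1 \<in> {1, -1} \<and> s2 \<in> {1, -1} \<and> s3 \<in> {1, -1}}"

definition Delta :: "(real^4) set" where "Delta = DeltaP tau tau'"
definition Delta' :: "(real^4) set" where "Delta' = DeltaP tau' tau"
definition Kset :: "(real^4) set" where "Kset = Delta \<inter> Delta'"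
definition Deltadot :: "(real^4) set" where "Deltadot = Delta - Kset"
definition Deltadot' :: "(real^4) set" where "Deltadot' = Delta' - Kset"

definition reflect :: "real^4 \<Rightarrow> real^4 \<Rightarrow> real^4" where
  "reflect a x = x - (2 * (x \<bullet> a)) *\<^sub>R a"

text \<open>Congruence modulo 2 Z[tau], coordinatewise: the reductions in F_4^4 agree.\<close>
definition cong2 :: "real^4 \<Rightarrow> real^4 \<Rightarrow> bool" where
  "cong2 y z \<longleftrightarrow> (\<forall>i. (y $ i - z $ i) / 2 \<in> ZT)"

text \<open>Representatives in Z[tau] of the four elements of F_4 = Z[tau]/2Z[tau].\<close>
definition F4reps :: "real set" where "F4reps = {0, 1, tau, tau'}"

definition one4 :: "real^4" where "one4 = vector [1, 1, 1, 1]"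

text \<open>Representatives (in Z[tau]^4) of the F_4-span of the reductions of u and w.\<close>
definition spanrep :: "real^4 \<Rightarrow> real^4 \<Rightarrow> (real^4) set" where
  "spanrep u w = {c *\<^sub>R u + d *\<^sub>R w | c d. c \<in> F4reps \<and> d \<in> F4reps}"

definition Arep :: "(real^4) set" where
  "Arep = spanrep one4 (vector [0, 1, tau', tau])"
definition Arep' :: "(real^4) set" where
  "Arep' = spanrep one4 (vector [0, 1, tau, tau'])"
definition Adotrep :: "(real^4) set" where
  "Adotrep = {permv p (vector [0, 1, tau', tau]) | p. p \<in> evenperms}"
definition Adotrep' :: "(real^4) set" where
  "Adotrep' = {permv p (vector [0, 1, tau', tau]) | p. p \<in> oddperms}"

definition red_in_nonzero :: "real^4 \<Rightarrow> (real^4) set \<Rightarrow> bool" where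
  "red_in_nonzero y R \<longleftrightarrow> (\<exists>v\<in>R. cong2 y v \<and> \<not> cong2 v 0)"
definition red_in :: "real^4 \<Rightarrow> (real^4) set \<Rightarrow> bool" where
  "red_in y R \<longleftrightarrow> (\<exists>v\<in>R. cong2 y v)"

definition unitlat :: "nat \<Rightarrow> real^4 \<Rightarrow> bool" where
  "unitlat n x \<longleftrightarrow> (\<forall>i. 2 ^ n * x $ i \<in> ZT) \<and> x \<bullet> x = 1"

definition S :: "nat \<Rightarrow> (real^4) set" where
  "S n = {x. unitlat n x \<and> red_in_nonzero ((2 ^ n) *\<^sub>R x) Arep}"
definition S' :: "nat \<Rightarrow> (real^4) set" where
  "S' n = {x. unitlat n x \<and> red_in_nonzero ((2 ^ n) *\<^sub>R x) Arep'}"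
definition Sdot :: "nat \<Rightarrow> (real^4) set" where
  "Sdot n = {x. unitlat n x \<and> red_in ((2 ^ n) *\<^sub>R x) Adotrep}"
definition Sdot' :: "nat \<Rightarrow> (real^4) set" where
  "Sdot' n = {x. unitlat n x \<and> red_in ((2 ^ n) *\<^sub>R x) Adotrep'}"

end

theory Submission
  imports Defs
begin



datatype f4 = F0 | F1 | FW | FV

fun fadd :: "f4 \<Rightarrow> f4 \<Rightarrow> f4" where
 "fadd F0 x = x" | "fadd x F0 = x" | "fadd F1 F1 = F0" | "fadd F1 FW = FV" | "fadd F1 FV = FW"
| "fadd FW F1 = FV" | "fadd FW FW = F0" | "fadd FW FV = F1"
| "fadd FV F1 = FW" | "fadd FV FW = F1" | "fadd FV FV = F0"
fun fmul :: "f4 \<Rightarrow> f4 \<Rightarrow> f4" where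
 "fmul F0 x = F0" | "fmul x F0 = F0" | "fmul F1 x = x" | "fmul x F1 = x"
| "fmul FW FW = FV" | "fmul FW FV = F1" | "fmul FV FW = F1" | "fmul FV FV = FW"

lemma f4_all: "(\<forall>x. P x) \<longleftrightarrow> P F0 \<and> P F1 \<and> P FW \<and> P FV"
  by (metis f4.exhaust)
lemma f4_ex: "(\<exists>x. P x) \<longleftrightarrow> P F0 \<or> P F1 \<or> P FW \<or> P FV"
  by (metis f4.exhaust)

type_synonym f4v = "f4 \<times> f4 \<times> f4 \<times> f4"
fun vadd :: "f4v \<Rightarrow> f4v \<Rightarrow> f4v" where
 "vadd (a,b,c,d) (e,f,g,h) = (fadd a e, fadd b f, fadd c g, fadd d h)"
fun vsm :: "f4 \<Rightarrow> f4v \<Rightarrow> f4v" where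
 "vsm l (a,b,c,d) = (fmul l a, fmul l b, fmul l c, fmul l d)"
fun fdot :: "f4v \<Rightarrow> f4v \<Rightarrow> f4" where
 "fdot (a,b,c,d) (e,f,g,h) = fadd (fadd (fmul a e) (fmul b f)) (fadd (fmul c g) (fmul d h))"

definition "one_f = (F1,F1,F1,F1)"
definition "gb = (F0,F1,FV,FW)"
definition "Afin = set [(F0,F0,F0,F0), (F0,F1,FV,FW), (F0,FW,F1,FV), (F0,FV,FW,F1), (F1,F0,FW,FV), (F1,F1,F1,F1), (F1,FW,FV,F0), (F1,FV,F0,FW), (FW,F0,FV,F1), (FW,F1,F0,FV), (FW,FW,FW,FW), (FW,FV,F1,F0), (FV,F0,F1,FW), (FV,F1,FW,F0), (FV,FW,F0,F1), (FV,FV,FV,FV)]"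
definition "Apfin = set [(F0,F0,F0,F0), (F0,F1,FW,FV), (F0,FW,FV,F1), (F0,FV,F1,FW), (F1,F0,FV,FW), (F1,F1,F1,F1), (F1,FW,F0,FV), (F1,FV,FW,F0), (FW,F0,F1,FV), (FW,F1,FV,F0), (FW,FW,FW,FW), (FW,FV,F0,F1), (FV,F0,FW,F1), (FV,F1,F0,FW), (FV,FW,F1,F0), (FV,FV,FV,FV)]"
definition "zf = (F0,F0,F0,F0)"

fun qa :: "f4 \<Rightarrow> int" where "qa F0 = 0" | "qa F1 = 1" | "qa FW = 1" | "qa FV = 2"
fun qb :: "f4 \<Rightarrow> int" where "qb F0 = 0" | "qb F1 = 0" | "qb FW = 1" | "qb FV = -1"

definition gbf :: "4 \<Rightarrow> f4" where
  "gbf m = (if m = 1 then F0 else if m = 2 then F1 else if m = 3 then FV else FW)"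
definition Tp :: "(4 \<Rightarrow> 4) \<Rightarrow> f4v" where
  "Tp p = (gbf (p 1), gbf (p 2), gbf (p 3), gbf (p 4))"

definition "wE0 = (id)"
lemma wE0: "Tp wE0 = (F0,F1,FV,FW)" "wE0 permutes UNIV" "evenperm wE0"
  unfolding wE0_def by (simp_all add: Tp_def gbf_def Transposition.transpose_def permutes_compose permutes_swap_id permutes_id evenperm_comp permutation_compose permutation_swap_id evenperm_swap)
definition "wE1 = (Transposition.transpose (2::4) 3 \<circ> Transposition.transpose (3::4) 4)"
lemma wE1: "Tp wE1 = (F0,FV,FW,F1)" "wE1 permutes UNIV" "evenperm wE1"
  unfolding wE1_def by (simp_all add: Tp_def gbf_def Transposition.transpose_def permutes_compose permutes_swap_id permutes_id evenperm_comp permutation_compose permutation_swap_id evenperm_swap)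
definition "wE2 = (Transposition.transpose (2::4) 4 \<circ> Transposition.transpose (3::4) 4)"
lemma wE2: "Tp wE2 = (F0,FW,F1,FV)" "wE2 permutes UNIV" "evenperm wE2"
  unfolding wE2_def by (simp_all add: Tp_def gbf_def Transposition.transpose_def permutes_compose permutes_swap_id permutes_id evenperm_comp permutation_compose permutation_swap_id evenperm_swap)
definition "wE3 = (Transposition.transpose (1::4) 2 \<circ> Transposition.transpose (3::4) 4)"
lemma wE3: "Tp wE3 = (F1,F0,FW,FV)" "wE3 permutes UNIV" "evenperm wE3"
  unfolding wE3_def by (simp_all add: Tp_def gbf_def Transposition.transpose_def permutes_compose permutes_swap_id permutes_id evenperm_comp permutation_compose permutation_swap_id evenperm_swap)
definition "wE4 = (Transposition.transpose (1::4) 2 \<circ> Transposition.transpose (2::4) 3)"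
lemma wE4: "Tp wE4 = (F1,FV,F0,FW)" "wE4 permutes UNIV" "evenperm wE4"
  unfolding wE4_def by (simp_all add: Tp_def gbf_def Transposition.transpose_def permutes_compose permutes_swap_id permutes_id evenperm_comp permutation_compose permutation_swap_id evenperm_swap)
definition "wE5 = (Transposition.transpose (1::4) 2 \<circ> Transposition.transpose (2::4) 4)"
lemma wE5: "Tp wE5 = (F1,FW,FV,F0)" "wE5 permutes UNIV" "evenperm wE5"
  unfolding wE5_def by (simp_all add: Tp_def gbf_def Transposition.transpose_def permutes_compose permutes_swap_id permutes_id evenperm_comp permutation_compose permutation_swap_id evenperm_swap)
definition "wE6 = (Transposition.transpose (1::4) 3 \<circ> Transposition.transpose (2::4) 3)"
lemma wE6: "Tp wE6 = (FV,F0,F1,FW)" "wE6 permutes UNIV" "evenperm wE6"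
  unfolding wE6_def by (simp_all add: Tp_def gbf_def Transposition.transpose_def permutes_compose permutes_swap_id permutes_id evenperm_comp permutation_compose permutation_swap_id evenperm_swap)
definition "wE7 = (Transposition.transpose (1::4) 3 \<circ> Transposition.transpose (3::4) 4)"
lemma wE7: "Tp wE7 = (FV,F1,FW,F0)" "wE7 permutes UNIV" "evenperm wE7"
  unfolding wE7_def by (simp_all add: Tp_def gbf_def Transposition.transpose_def permutes_compose permutes_swap_id permutes_id evenperm_comp permutation_compose permutation_swap_id evenperm_swap)
definition "wE8 = (Transposition.transpose (1::4) 3 \<circ> Transposition.transpose (2::4) 4)"
lemma wE8: "Tp wE8 = (FV,FW,F0,F1)" "wE8 permutes UNIV" "evenperm wE8"
  unfolding wE8_def by (simp_all add: Tp_def gbf_def Transposition.transpose_def permutes_compose permutes_swap_id permutes_id evenperm_comp permutation_compose permutation_swap_id evenperm_swap)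
definition "wE9 = (Transposition.transpose (1::4) 4 \<circ> Transposition.transpose (2::4) 4)"
lemma wE9: "Tp wE9 = (FW,F0,FV,F1)" "wE9 permutes UNIV" "evenperm wE9"
  unfolding wE9_def by (simp_all add: Tp_def gbf_def Transposition.transpose_def permutes_compose permutes_swap_id permutes_id evenperm_comp permutation_compose permutation_swap_id evenperm_swap)
definition "wE10 = (Transposition.transpose (1::4) 4 \<circ> Transposition.transpose (3::4) 4)"
lemma wE10: "Tp wE10 = (FW,F1,F0,FV)" "wE10 permutes UNIV" "evenperm wE10"
  unfolding wE10_def by (simp_all add: Tp_def gbf_def Transposition.transpose_def permutes_compose permutes_swap_id permutes_id evenperm_comp permutation_compose permutation_swap_id evenperm_swap)
definition "wE11 = (Transposition.transpose (1::4) 4 \<circ> Transposition.transpose (2::4) 3)"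
lemma wE11: "Tp wE11 = (FW,FV,F1,F0)" "wE11 permutes UNIV" "evenperm wE11"
  unfolding wE11_def by (simp_all add: Tp_def gbf_def Transposition.transpose_def permutes_compose permutes_swap_id permutes_id evenperm_comp permutation_compose permutation_swap_id evenperm_swap)
definition "wO0 = (Transposition.transpose (3::4) 4)"
lemma wO0: "Tp wO0 = (F0,F1,FW,FV)" "wO0 permutes UNIV" "\<not> evenperm wO0"
  unfolding wO0_def by (simp_all add: Tp_def gbf_def Transposition.transpose_def permutes_compose permutes_swap_id permutes_id evenperm_comp permutation_compose permutation_swap_id evenperm_swap)
definition "wO1 = (Transposition.transpose (2::4) 3)"
lemma wO1: "Tp wO1 = (F0,FV,F1,FW)" "wO1 permutes UNIV" "\<not> evenperm wO1"
  unfolding wO1_def by (simp_all add: Tp_def gbf_def Transposition.transpose_def permutes_compose permutes_swap_id permutes_id evenperm_comp permutation_compose permutation_swap_id evenperm_swap)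
definition "wO2 = (Transposition.transpose (2::4) 4)"
lemma wO2: "Tp wO2 = (F0,FW,FV,F1)" "wO2 permutes UNIV" "\<not> evenperm wO2"
  unfolding wO2_def by (simp_all add: Tp_def gbf_def Transposition.transpose_def permutes_compose permutes_swap_id permutes_id evenperm_comp permutation_compose permutation_swap_id evenperm_swap)
definition "wO3 = (Transposition.transpose (1::4) 2)"
lemma wO3: "Tp wO3 = (F1,F0,FV,FW)" "wO3 permutes UNIV" "\<not> evenperm wO3"
  unfolding wO3_def by (simp_all add: Tp_def gbf_def Transposition.transpose_def permutes_compose permutes_swap_id permutes_id evenperm_comp permutation_compose permutation_swap_id evenperm_swap)
definition "wO4 = (Transposition.transpose (1::4) 2 \<circ> Transposition.transpose (2::4) 3 \<circ> Transposition.transpose (3::4) 4)"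
lemma wO4: "Tp wO4 = (F1,FV,FW,F0)" "wO4 permutes UNIV" "\<not> evenperm wO4"
  unfolding wO4_def by (simp_all add: Tp_def gbf_def Transposition.transpose_def permutes_compose permutes_swap_id permutes_id evenperm_comp permutation_compose permutation_swap_id evenperm_swap)
definition "wO5 = (Transposition.transpose (1::4) 2 \<circ> Transposition.transpose (2::4) 4 \<circ> Transposition.transpose (3::4) 4)"
lemma wO5: "Tp wO5 = (F1,FW,F0,FV)" "wO5 permutes UNIV" "\<not> evenperm wO5"
  unfolding wO5_def by (simp_all add: Tp_def gbf_def Transposition.transpose_def permutes_compose permutes_swap_id permutes_id evenperm_comp permutation_compose permutation_swap_id evenperm_swap)
definition "wO6 = (Transposition.transpose (1::4) 3 \<circ> Transposition.transpose (2::4) 3 \<circ> Transposition.transpose (3::4) 4)"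
lemma wO6: "Tp wO6 = (FV,F0,FW,F1)" "wO6 permutes UNIV" "\<not> evenperm wO6"
  unfolding wO6_def by (simp_all add: Tp_def gbf_def Transposition.transpose_def permutes_compose permutes_swap_id permutes_id evenperm_comp permutation_compose permutation_swap_id evenperm_swap)
definition "wO7 = (Transposition.transpose (1::4) 3)"
lemma wO7: "Tp wO7 = (FV,F1,F0,FW)" "wO7 permutes UNIV" "\<not> evenperm wO7"
  unfolding wO7_def by (simp_all add: Tp_def gbf_def Transposition.transpose_def permutes_compose permutes_swap_id permutes_id evenperm_comp permutation_compose permutation_swap_id evenperm_swap)
definition "wO8 = (Transposition.transpose (1::4) 3 \<circ> Transposition.transpose (2::4) 4 \<circ> Transposition.transpose (3::4) 4)"
lemma wO8: "Tp wO8 = (FV,FW,F1,F0)" "wO8 permutes UNIV" "\<not> evenperm wO8"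
  unfolding wO8_def by (simp_all add: Tp_def gbf_def Transposition.transpose_def permutes_compose permutes_swap_id permutes_id evenperm_comp permutation_compose permutation_swap_id evenperm_swap)
definition "wO9 = (Transposition.transpose (1::4) 4 \<circ> Transposition.transpose (2::4) 4 \<circ> Transposition.transpose (3::4) 4)"
lemma wO9: "Tp wO9 = (FW,F0,F1,FV)" "wO9 permutes UNIV" "\<not> evenperm wO9"
  unfolding wO9_def by (simp_all add: Tp_def gbf_def Transposition.transpose_def permutes_compose permutes_swap_id permutes_id evenperm_comp permutation_compose permutation_swap_id evenperm_swap)
definition "wO10 = (Transposition.transpose (1::4) 4)"
lemma wO10: "Tp wO10 = (FW,F1,FV,F0)" "wO10 permutes UNIV" "\<not> evenperm wO10"
  unfolding wO10_def by (simp_all add: Tp_def gbf_def Transposition.transpose_def permutes_compose permutes_swap_id permutes_id evenperm_comp permutation_compose permutation_swap_id evenperm_swap)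
definition "wO11 = (Transposition.transpose (1::4) 4 \<circ> Transposition.transpose (2::4) 3 \<circ> Transposition.transpose (3::4) 4)"
lemma wO11: "Tp wO11 = (FW,FV,F0,F1)" "wO11 permutes UNIV" "\<not> evenperm wO11"
  unfolding wO11_def by (simp_all add: Tp_def gbf_def Transposition.transpose_def permutes_compose permutes_swap_id permutes_id evenperm_comp permutation_compose permutation_swap_id evenperm_swap)
definition "EvenT = set [(F0,F1,FV,FW), (F0,FV,FW,F1), (F0,FW,F1,FV), (F1,F0,FW,FV), (F1,FV,F0,FW), (F1,FW,FV,F0), (FV,F0,F1,FW), (FV,F1,FW,F0), (FV,FW,F0,F1), (FW,F0,FV,F1), (FW,F1,F0,FV), (FW,FV,F1,F0)]"
definition "OddT = set [(F0,F1,FW,FV), (F0,FV,F1,FW), (F0,FW,FV,F1), (F1,F0,FV,FW), (F1,FV,FW,F0), (F1,FW,F0,FV), (FV,F0,FW,F1), (FV,F1,F0,FW), (FV,FW,F1,F0), (FW,F0,F1,FV), (FW,F1,FV,F0), (FW,FV,F0,F1)]"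




lemma fadd_self[simp]: "fadd x x = F0" by (cases x) auto
lemma fadd_0r[simp]: "fadd x F0 = x" by (cases x) auto
lemma fmul_0r[simp]: "fmul x F0 = F0" by (cases x) auto
lemma fmul_1r[simp]: "fmul x F1 = x" by (cases x) auto
lemma fadd_comm: "fadd x y = fadd y x" by (cases x; cases y) auto
lemma fadd_assoc: "fadd (fadd x y) z = fadd x (fadd y z)" by (cases x; cases y; cases z) auto
lemma fmul_assoc: "fmul (fmul x y) z = fmul x (fmul y z)" by (cases x; cases y; cases z) auto
lemma fmul_distrib: "fmul x (fadd y z) = fadd (fmul x y) (fmul x z)" by (cases x; cases y; cases z) auto
lemma fadd_eq0: "fadd x y = F0 \<longleftrightarrow> x = y" by (cases x; cases y) auto
lemma fmul_comm: "fmul x y = fmul y x" by (cases x; cases y) auto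

lemma Afin_span: "vadd (vsm c one_f) (vsm d gb) \<in> Afin"
  unfolding Afin_def one_f_def gb_def by (cases c; cases d) simp_all

lemma Afin_span_ex: "f \<in> Afin \<Longrightarrow> \<exists>c d. f = vadd (vsm c one_f) (vsm d gb)"
  unfolding Afin_def one_f_def gb_def 
  apply (simp only: set_simps insert_iff empty_iff)
  by (elim disjE) (simp_all add: f4_ex)

lemma R2fin: "4 dvd (qa a + qa b + qa c + qa d) \<Longrightarrow> 4 dvd (qb a + qb b + qb c + qb d) \<Longrightarrow>
   (a,b,c,d) \<in> Afin \<union> Apfin"
  unfolding Afin_def Apfin_def
  by (cases a; cases b; cases c; cases d) simp_all

lemma FA1: "\<forall>f\<in>Afin. \<forall>e\<in>EvenT. fdot f e = F0"
  unfolding EvenT_def Afin_def by simp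

lemma FA2: "\<forall>f\<in>Afin. \<forall>e\<in>EvenT. \<forall>m. vadd f (vsm m e) \<in> Afin"
  unfolding EvenT_def Afin_def by (simp add: f4_all)

lemma FA4: "\<forall>f\<in>Apfin. f \<notin> Afin \<longrightarrow> f \<in> OddT"
  unfolding Apfin_def Afin_def OddT_def by simp

lemma FA5a: "\<forall>f\<in>Afin. f \<noteq> zf \<longrightarrow> f \<notin> EvenT \<longrightarrow> (\<forall>e\<in>EvenT. \<forall>m. vadd f (vsm m e) \<noteq> zf)"
  unfolding EvenT_def zf_def Afin_def by (simp add: f4_all)

lemma FA5b: "\<forall>f\<in>Afin. f \<noteq> zf \<longrightarrow> f \<notin> EvenT \<longrightarrow> (\<forall>m. m \<noteq> F0 \<longrightarrow> vadd f (vsm m gb) \<in> EvenT)"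
  unfolding EvenT_def zf_def Afin_def gb_def by (simp add: f4_all)

lemma FA5c: "\<forall>f\<in>Afin. f \<noteq> zf \<longrightarrow> f \<notin> EvenT \<longrightarrow> fst (snd f) \<noteq> F0"
  unfolding EvenT_def zf_def Afin_def by simp

lemma FA6: "e \<in> EvenT \<Longrightarrow> e \<in> Afin" "zf \<notin> EvenT" "one_f \<notin> EvenT" "zf \<in> Afin"
  unfolding EvenT_def zf_def one_f_def Afin_def by auto

lemma FA7: "\<forall>e\<in>EvenT. \<forall>m. m \<noteq> F0 \<longrightarrow> vsm m e \<in> EvenT"
  unfolding EvenT_def by (simp add: f4_all)

lemma FA8: "\<forall>e\<in>EvenT. \<forall>f\<in>EvenT. \<forall>k. vadd e (vsm k f) = zf \<longrightarrow>
   f = vsm F1 e \<or> f = vsm FW e \<or> f = vsm FV e"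
  unfolding EvenT_def zf_def by (simp add: f4_all)

lemma FA9: "\<forall>e\<in>EvenT. vsm F1 e \<noteq> vsm FW e \<and> vsm F1 e \<noteq> vsm FV e \<and> vsm FW e \<noteq> vsm FV e"
  unfolding EvenT_def by simp

lemma FA10: "EvenT \<inter> OddT = {}"
  unfolding EvenT_def OddT_def by simp

lemma FA11: "a \<noteq> b \<Longrightarrow> a \<noteq> c \<Longrightarrow> a \<noteq> d \<Longrightarrow> b \<noteq> c \<Longrightarrow> b \<noteq> d \<Longrightarrow> c \<noteq> d \<Longrightarrow>
   (a,b,c,d) \<in> EvenT \<union> OddT"
  unfolding EvenT_def OddT_def by (cases a; cases b; cases c; cases d) simp_all

lemma gbf_inj: "gbf x = gbf y \<Longrightarrow> x = y"
  using exhaust_4[of x] exhaust_4[of y] by (auto simp: gbf_def)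

lemma Tp_inj: "Tp p = Tp q \<Longrightarrow> p = q"
proof
  fix j assume "Tp p = Tp q"
  then have "\<forall>j. gbf (p j) = gbf (q j)" unfolding Tp_def forall_4 by auto
  then show "p j = q j" using gbf_inj by blast
qed

lemma P2: assumes "p permutes UNIV" shows "Tp p \<in> EvenT \<union> OddT"
proof -
  have inj: "inj p" using assms permutes_inj by blast
  have "gbf (p i) \<noteq> gbf (p j)" if "i \<noteq> j" for i j
    using gbf_inj inj that unfolding inj_def by metis
  then show ?thesis unfolding Tp_def by (intro FA11) auto
qed

lemma EvenT_eq: "EvenT = Tp ` {wE0, wE1, wE2, wE3, wE4, wE5, wE6, wE7, wE8, wE9, wE10, wE11}"
  by (simp add: EvenT_def wE0 wE1 wE2 wE3 wE4 wE5 wE6 wE7 wE8 wE9 wE10 wE11)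
lemma OddT_eq: "OddT = Tp ` {wO0, wO1, wO2, wO3, wO4, wO5, wO6, wO7, wO8, wO9, wO10, wO11}"
  by (simp add: OddT_def wO0 wO1 wO2 wO3 wO4 wO5 wO6 wO7 wO8 wO9 wO10 wO11)
lemma P4e: "f \<in> EvenT \<Longrightarrow> \<exists>p. p permutes UNIV \<and> evenperm p \<and> Tp p = f"
proof -
  assume "f \<in> EvenT"
  then obtain w where w: "w \<in> {wE0, wE1, wE2, wE3, wE4, wE5, wE6, wE7, wE8, wE9, wE10, wE11}" "f = Tp w" unfolding EvenT_eq by blast
  have "w permutes UNIV \<and> evenperm w" using w(1) wE0 wE1 wE2 wE3 wE4 wE5 wE6 wE7 wE8 wE9 wE10 wE11 by auto
  then show ?thesis using w by blast
qed

lemma P4o: "f \<in> OddT \<Longrightarrow> \<exists>p. p permutes UNIV \<and> \<not> evenperm p \<and> Tp p = f"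
proof -
  assume "f \<in> OddT"
  then obtain w where w: "w \<in> {wO0, wO1, wO2, wO3, wO4, wO5, wO6, wO7, wO8, wO9, wO10, wO11}" "f = Tp w" unfolding OddT_eq by blast
  have "w permutes UNIV \<and> \<not> evenperm w" using w(1) wO0 wO1 wO2 wO3 wO4 wO5 wO6 wO7 wO8 wO9 wO10 wO11 by auto
  then show ?thesis using w by blast
qed

lemma P3: assumes "p permutes UNIV"
  shows "evenperm p \<Longrightarrow> Tp p \<in> EvenT" "\<not> evenperm p \<Longrightarrow> Tp p \<in> OddT"
proof -
  assume e: "evenperm p"
  show "Tp p \<in> EvenT"
  proof (rule ccontr)
    assume "Tp p \<notin> EvenT"
    then have "Tp p \<in> OddT" using P2[OF assms] by auto
    then obtain w where "\<not> evenperm w" "Tp w = Tp p" using P4o by metis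
    then show False using Tp_inj e by metis
  qed
next
  assume e: "\<not> evenperm p"
  show "Tp p \<in> OddT"
  proof (rule ccontr)
    assume "Tp p \<notin> OddT"
    then have "Tp p \<in> EvenT" using P2[OF assms] by auto
    then obtain w where "evenperm w" "Tp w = Tp p" using P4e by metis
    then show False using Tp_inj e by metis
  qed
qed

lemma vec4[simp]: "(vector [a,b,c,d] :: 'a::zero^4) $ 1 = a" "(vector [a,b,c,d] :: 'a::zero^4) $ 2 = b"
  "(vector [a,b,c,d] :: 'a::zero^4) $ 3 = c" "(vector [a,b,c,d] :: 'a::zero^4) $ 4 = d"
  by (simp_all add: vector_def)




lemma descent_aux: "\<forall>a b::int. nat (\<bar>a\<bar> + \<bar>b\<bar>) < N \<longrightarrow> a*a + a*b - b*b = 0 \<longrightarrow> a = 0 \<and> b = 0"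
proof (induction N)
  case 0 then show ?case by simp
next
  case (Suc N)
  show ?case
  proof (intro allI impI)
    fix a b :: int assume h: "nat (\<bar>a\<bar> + \<bar>b\<bar>) < Suc N" and e: "a*a + a*b - b*b = 0"
    have ev: "even a \<and> even b"
    proof (rule ccontr)
      assume "\<not> (even a \<and> even b)"
      then have "odd (a*a + a*b - b*b)" by auto
      then show False using e by simp
    qed
    then obtain a' b' where ab: "a = 2*a'" "b = 2*b'" by (auto elim!: evenE)
    with e have e': "a'*a' + a'*b' - b'*b' = 0" by (simp add: algebra_simps)
    show "a = 0 \<and> b = 0"
    proof (cases "a = 0 \<and> b = 0")
      case True thus ?thesis .
    next
      case False
      then have "nat (\<bar>a'\<bar> + \<bar>b'\<bar>) < N" using h ab by auto
      with Suc.IH e' have "a' = 0 \<and> b' = 0" by blast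
      then show ?thesis using ab by simp
    qed
  qed
qed

lemma descent: "(a::int)*a + a*b - b*b = 0 \<Longrightarrow> a = 0 \<and> b = 0"
  using descent_aux[of "Suc (nat (\<bar>a\<bar> + \<bar>b\<bar>))"] by blast

definition code :: "int \<Rightarrow> int \<Rightarrow> f4" where
  "code a b = (if even a then (if even b then F0 else FW) else (if even b then F1 else FV))"

lemma code_add: "code (a+c) (b+d) = fadd (code a b) (code c d)"
  by (cases "even a"; cases "even b"; cases "even c"; cases "even d") (simp_all add: code_def)
lemma code_mult: "code (a*c+b*d) (a*d+b*c+b*d) = fmul (code a b) (code c d)"
  by (cases "even a"; cases "even b"; cases "even c"; cases "even d") (simp_all add: code_def)
lemma code_minus: "code (-a) (-b) = code a b"
  by (simp add: code_def)

locale gold =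
  fixes t :: real
  assumes tt: "t * t = t + 1"
begin

definition Z :: "real set" where "Z = {of_int a + of_int b * t | a b. True}"

lemma emb_zero: assumes "of_int a + of_int b * t = 0" shows "a = 0 \<and> b = 0"
proof -
  have h: "of_int a = - (of_int b * t)" using assms by linarith
  have "of_int a * of_int a + of_int a * of_int b - of_int b * of_int b = (of_int b * of_int b) * (t * t - t - 1)"
    unfolding h by (simp add: algebra_simps)
  also have "\<dots> = 0" using tt by simp
  finally have "of_int (a*a + a*b - b*b) = (0::real)" by simp
  then have "a*a + a*b - b*b = 0" by (simp only: of_int_eq_0_iff)
  then show ?thesis by (rule descent)
qed

lemma emb_inj: assumes "of_int a + of_int b * t = of_int c + of_int d * t" shows "a = c \<and> b = d"
proof -
  have "of_int (a - c) + of_int (b - d) * t = 0" using assms by (simp add: algebra_simps)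
  then show ?thesis using emb_zero by fastforce
qed

lemma ZE: assumes "r \<in> Z" obtains a b where "r = of_int a + of_int b * t"
  using assms unfolding Z_def by blast
lemma ZI: "of_int a + of_int b * t \<in> Z" unfolding Z_def by blast

lemma Z_add[simp,intro]: "r \<in> Z \<Longrightarrow> s \<in> Z \<Longrightarrow> r + s \<in> Z"
proof -
  assume "r \<in> Z" "s \<in> Z"
  then obtain a b c d where "r = of_int a + of_int b * t" "s = of_int c + of_int d * t" by (metis ZE)
  then have "r + s = of_int (a+c) + of_int (b+d) * t" by (simp add: algebra_simps)
  then show ?thesis using ZI by metis
qed
lemma Z_minus[simp,intro]: "r \<in> Z \<Longrightarrow> - r \<in> Z"
proof -
  assume "r \<in> Z"
  then obtain a b where "r = of_int a + of_int b * t" by (metis ZE)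
  then have "- r = of_int (-a) + of_int (-b) * t" by (simp add: algebra_simps)
  then show ?thesis using ZI by metis
qed
lemma Z_diff[simp,intro]: "r \<in> Z \<Longrightarrow> s \<in> Z \<Longrightarrow> r - s \<in> Z"
  using Z_add[of r "-s"] Z_minus[of s] by simp
lemma mult_emb: "(of_int a + of_int b * t) * (of_int c + of_int d * t) = of_int (a*c+b*d) + of_int (a*d+b*c+b*d) * t"
proof -
  have "(of_int a + of_int b * t) * (of_int c + of_int d * t) = of_int a * of_int c + (of_int a * of_int d + of_int b * of_int c) * t + of_int b * of_int d * (t*t)"
    by (simp add: algebra_simps)
  also have "\<dots> = of_int (a*c+b*d) + of_int (a*d+b*c+b*d) * t" unfolding tt by (simp add: algebra_simps)
  finally show ?thesis .
qed
lemma Z_mult[simp,intro]: "r \<in> Z \<Longrightarrow> s \<in> Z \<Longrightarrow> r * s \<in> Z"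
proof -
  assume "r \<in> Z" "s \<in> Z"
  then obtain a b c d where "r = of_int a + of_int b * t" "s = of_int c + of_int d * t" by (metis ZE)
  then show ?thesis using ZI mult_emb by metis
qed
lemma Z_of_int[simp,intro]: "of_int k \<in> Z" using ZI[of k 0] by simp
lemma Z_0[simp,intro]: "0 \<in> Z" using Z_of_int[of 0] by simp
lemma Z_1[simp,intro]: "1 \<in> Z" using Z_of_int[of 1] by simp
lemma Z_numeral[simp,intro]: "numeral k \<in> Z" using Z_of_int[of "numeral k"] by simp
lemma Z_t[simp,intro]: "t \<in> Z" using ZI[of 0 1] by simp
lemma Z_pow[simp,intro]: "r \<in> Z \<Longrightarrow> r ^ k \<in> Z" by (induction k) auto

definition rd :: "real \<Rightarrow> f4" where
  "rd r = (SOME f. \<exists>a b. r = of_int a + of_int b * t \<and> f = code a b)"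

lemma rd_emb: "rd (of_int a + of_int b * t) = code a b"
  unfolding rd_def by (rule some_equality) (auto dest: emb_inj)

lemma rd_add: "r \<in> Z \<Longrightarrow> s \<in> Z \<Longrightarrow> rd (r + s) = fadd (rd r) (rd s)"
proof -
  assume "r \<in> Z" "s \<in> Z"
  then obtain a b c d where rs: "r = of_int a + of_int b * t" "s = of_int c + of_int d * t" by (metis ZE)
  then have "r + s = of_int (a+c) + of_int (b+d) * t" by (simp add: algebra_simps)
  then have "rd (r + s) = code (a+c) (b+d)" by (simp only: rd_emb)
  then show ?thesis using rs by (simp only: rd_emb code_add)
qed
lemma rd_minus: "r \<in> Z \<Longrightarrow> rd (- r) = rd r"
proof -
  assume "r \<in> Z"
  then obtain a b where rs: "r = of_int a + of_int b * t" by (metis ZE)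
  then have "- r = of_int (-a) + of_int (-b) * t" by (simp add: algebra_simps)
  then have "rd (- r) = code (-a) (-b)" by (simp only: rd_emb)
  then show ?thesis using rs by (simp only: rd_emb code_minus)
qed
lemma rd_diff: "r \<in> Z \<Longrightarrow> s \<in> Z \<Longrightarrow> rd (r - s) = fadd (rd r) (rd s)"
  using rd_add[of r "-s"] rd_minus[of s] by simp
lemma rd_mult: "r \<in> Z \<Longrightarrow> s \<in> Z \<Longrightarrow> rd (r * s) = fmul (rd r) (rd s)"
proof -
  assume "r \<in> Z" "s \<in> Z"
  then obtain a b c d where rs: "r = of_int a + of_int b * t" "s = of_int c + of_int d * t" by (metis ZE)
  then have "rd (r * s) = code (a*c+b*d) (a*d+b*c+b*d)" by (simp only: mult_emb rd_emb)
  then show ?thesis using rs by (simp only: rd_emb code_mult)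
qed
lemma rd_of_int: "rd (of_int k) = (if even k then F0 else F1)"
  using rd_emb[of k 0] by (simp add: code_def)
lemma rd_0[simp]: "rd 0 = F0" using rd_of_int[of 0] by simp
lemma rd_1[simp]: "rd 1 = F1" using rd_of_int[of 1] by simp
lemma rd_t[simp]: "rd t = FW" using rd_emb[of 0 1] by (simp add: code_def)
lemma rd_1mt[simp]: "rd (1 - t) = FV" using rd_emb[of 1 "-1"] by (simp add: code_def)
lemma Z_1mt[simp,intro]: "1 - t \<in> Z" by auto

lemma rd_ev: assumes "r \<in> Z" shows "r / 2 \<in> Z \<longleftrightarrow> rd r = F0"
proof -
  obtain a b where r: "r = of_int a + of_int b * t" using assms by (metis ZE)
  show ?thesis
  proof
    assume "r / 2 \<in> Z"
    then obtain c d where "r / 2 = of_int c + of_int d * t" by (metis ZE)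
    then have "of_int a + of_int b * t = of_int (2*c) + of_int (2*d) * t" using r by (simp add: algebra_simps)
    then have "a = 2*c \<and> b = 2*d" by (rule emb_inj)
    then have "rd r = code (2*c) (2*d)" using r by (simp only: rd_emb)
    then show "rd r = F0" by (simp add: code_def)
  next
    assume "rd r = F0"
    then have "even a" "even b" using r by (auto simp: rd_emb code_def split: if_splits)
    then obtain c d where "a = 2*c" "b = 2*d" by (auto elim!: evenE)
    then have "r / 2 = of_int c + of_int d * t" using r by (simp add: algebra_simps)
    then show "r / 2 \<in> Z" using ZI by metis
  qed
qed

lemma rd_2x[simp]: "r \<in> Z \<Longrightarrow> rd (2 * r) = F0"
  using rd_ev[of "2*r"] by auto

lemma four_dvd: assumes "(of_int a + of_int b * t) / 4 \<in> Z" shows "4 dvd a \<and> 4 dvd b"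
proof -
  obtain c d where "(of_int a + of_int b * t) / 4 = of_int c + of_int d * t" using assms by (metis ZE)
  then have "of_int a + of_int b * t = of_int (4*c) + of_int (4*d) * t" by (simp add: algebra_simps)
  then have "a = 4*c \<and> b = 4*d" by (rule emb_inj)
  then show ?thesis by simp
qed

fun L :: "f4 \<Rightarrow> real" where "L F0 = 0" | "L F1 = 1" | "L FW = t" | "L FV = 1 - t"

lemma L_Z[simp,intro]: "L f \<in> Z" by (cases f) auto
lemma rd_L[simp]: "rd (L f) = f" by (cases f) auto
lemma L_sq: "L f * L f = of_int (qa f) + of_int (qb f) * t"
  by (cases f) (auto simp: tt algebra_simps)

lemma sq_aux: "(r::real) = l + 2 * e \<Longrightarrow> r * r = l * l + 4 * (l * e + e * e)" by (simp add: algebra_simps)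

lemma sq_lift: assumes "r \<in> Z" shows "\<exists>e\<in>Z. r * r = of_int (qa (rd r)) + of_int (qb (rd r)) * t + 4 * e"
proof -
  define e where "e = (r - L (rd r)) / 2"
  have "rd (r - L (rd r)) = F0" using assms by (simp add: rd_diff)
  then have eZ: "e \<in> Z" unfolding e_def using rd_ev assms by auto
  have "r = L (rd r) + 2 * e" unfolding e_def by (simp add: field_simps)
  then have "r * r = L (rd r) * L (rd r) + 4 * (L (rd r) * e + e * e)" using sq_aux by blast
  then show ?thesis using eZ L_sq by (intro bexI[of _ "L (rd r) * e + e * e"]) auto
qed

end



lemma permv_nth[simp]: "permv p v $ j = v $ p j" by (simp add: permv_def)
lemma permv_scale: "permv p (c *\<^sub>R v) = c *\<^sub>R permv p v" by (simp add: vec_eq_iff)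
lemma permv_diff: "permv p (v - w) = permv p v - permv p w" by (simp add: vec_eq_iff)
lemma permv_add: "permv p (v + w) = permv p v + permv p w" by (simp add: vec_eq_iff)
lemma permv_minus: "permv p (- v) = - permv p v" by (simp add: vec_eq_iff)
lemma permv_inner: assumes "p permutes UNIV" shows "permv p v \<bullet> permv p w = v \<bullet> w"
proof -
  have b: "bij_betw p UNIV UNIV" using assms permutes_imp_bij by blast
  have "permv p v \<bullet> permv p w = (\<Sum>j\<in>UNIV. (\<lambda>i. v$i * w$i) (p j))" by (simp add: inner_vec_def)
  also have "\<dots> = (\<Sum>i\<in>UNIV. v$i * w$i)" by (rule sum.reindex_bij_betw[OF b])
  also have "\<dots> = v \<bullet> w" by (simp add: inner_vec_def)
  finally show ?thesis .
qed
lemma permv_inv: assumes "p permutes UNIV" shows "permv p (permv (inv p) y) = y"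
  using permutes_inverses(2)[OF assms] by (simp add: vec_eq_iff)
lemma perm_all: assumes "p permutes UNIV" "\<forall>j. P (p j)" shows "P m"
proof -
  obtain j where "m = p j" using permutes_surj[OF assms(1)] unfolding surj_def by blast
  then show ?thesis using assms(2) by simp
qed

lemma inner4: "x \<bullet> y = x$1*y$1 + x$2*y$2 + x$3*y$3 + x$4*y$4" for x y :: "real^4"
  by (simp add: inner_vec_def sum_4)

lemma reflect_half: "reflect ((1/2) *\<^sub>R a) x = x - ((x \<bullet> a) / 2) *\<^sub>R a"
  unfolding reflect_def by (simp add: scaleR_scaleR)
lemma reflect_scale: "reflect a (c *\<^sub>R x) = c *\<^sub>R reflect a x"
  unfolding reflect_def by (simp add: algebra_simps)
lemma reflect_dot: "a \<bullet> a = 1 \<Longrightarrow> reflect a x \<bullet> a = - (x \<bullet> a)"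
  unfolding reflect_def by (simp add: inner_diff_left)
lemma reflect_invol: "a \<bullet> a = 1 \<Longrightarrow> reflect a (reflect a x) = x"
proof -
  assume h: "a \<bullet> a = 1"
  have "reflect a (reflect a x) = reflect a x + (2 * (x \<bullet> a)) *\<^sub>R a"
    unfolding reflect_def[of a "reflect a x"] reflect_dot[OF h] by simp
  then show ?thesis unfolding reflect_def by simp
qed
lemma reflect_norm: "a \<bullet> a = 1 \<Longrightarrow> reflect a x \<bullet> reflect a x = x \<bullet> x"
proof -
  assume h: "a \<bullet> a = 1"
  define k where "k = 2 * (x \<bullet> a)"
  have "reflect a x \<bullet> reflect a x = reflect a x \<bullet> x - k * (reflect a x \<bullet> a)"
    unfolding reflect_def[of a x] k_def[symmetric] by (simp add: inner_diff_right)
  also have "reflect a x \<bullet> x = x \<bullet> x - k * (x \<bullet> a)"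
    unfolding reflect_def k_def by (simp add: inner_diff_left inner_diff_right inner_commute)
  finally show ?thesis unfolding reflect_dot[OF h] k_def by simp
qed
lemma reflect_neg: "reflect (- a) = reflect a"
  unfolding reflect_def by (rule ext) simp
lemma reflect_eq: assumes "a \<bullet> a = 1" "b \<bullet> b = 1" "reflect a = reflect b" shows "b = a \<or> b = - a"
proof -
  have "reflect a a = - a" using assms(1) unfolding reflect_def by (simp add: scaleR_2)
  then have "reflect b a = - a" using assms(3) by simp
  then have e: "a - (2 * (a \<bullet> b)) *\<^sub>R b = - a" unfolding reflect_def .
  then have e2: "a + a = (2 * (a \<bullet> b)) *\<^sub>R b" by (simp add: algebra_simps)
  have "a = (1/2) *\<^sub>R (a + a)" by (simp add: scaleR_2[symmetric])
  also have "\<dots> = (a \<bullet> b) *\<^sub>R b" unfolding e2 by simp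
  finally have h: "a = (a \<bullet> b) *\<^sub>R b" .
  then have "a \<bullet> a = (a \<bullet> b) * (a \<bullet> b)" by (metis assms(2) inner_scaleR_left inner_scaleR_right mult.right_neutral)
  then have "(a \<bullet> b) * (a \<bullet> b) = 1" using assms(1) by simp
  then have "a \<bullet> b = 1 \<or> a \<bullet> b = -1" by (metis mult_cancel_left1 square_eq_1_iff)
  then show ?thesis using h by (metis add.inverse_inverse scaleR_minus1_left scaleR_one)
qed

context gold begin

definition Zv :: "real^4 \<Rightarrow> bool" where "Zv v \<longleftrightarrow> (\<forall>i. v$i \<in> Z)"
definition rdv :: "real^4 \<Rightarrow> f4v" where "rdv v = (rd (v$1), rd (v$2), rd (v$3), rd (v$4))"

lemma rdv_eq: "rdv v = rdv w \<longleftrightarrow> (\<forall>i. rd (v$i) = rd (w$i))" unfolding rdv_def forall_4 by auto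
lemma rdv_zf: "rdv v = zf \<longleftrightarrow> (\<forall>i. rd (v$i) = F0)" unfolding rdv_def zf_def forall_4 by auto

lemma Zv_add: "Zv v \<Longrightarrow> Zv w \<Longrightarrow> Zv (v + w)" unfolding Zv_def by auto
lemma Zv_diff: "Zv v \<Longrightarrow> Zv w \<Longrightarrow> Zv (v - w)" unfolding Zv_def by auto
lemma Zv_minus: "Zv v \<Longrightarrow> Zv (- v)" unfolding Zv_def by auto
lemma Zv_scale: "c \<in> Z \<Longrightarrow> Zv v \<Longrightarrow> Zv (c *\<^sub>R v)" unfolding Zv_def by auto
lemma Zv_permv: "Zv v \<Longrightarrow> Zv (permv p v)" unfolding Zv_def by auto
lemma Zv_dot: "Zv x \<Longrightarrow> Zv y \<Longrightarrow> x \<bullet> y \<in> Z" unfolding Zv_def inner4 by auto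

lemma rd_dot: assumes "Zv x" "Zv y" shows "rd (x \<bullet> y) = fdot (rdv x) (rdv y)"
  using assms unfolding Zv_def inner4 rdv_def by (simp add: rd_add rd_mult fadd_assoc)

lemma rdv_add: "Zv v \<Longrightarrow> Zv w \<Longrightarrow> rdv (v + w) = vadd (rdv v) (rdv w)"
  unfolding Zv_def rdv_def by (simp add: rd_add)
lemma rdv_scale: "c \<in> Z \<Longrightarrow> Zv v \<Longrightarrow> rdv (c *\<^sub>R v) = vsm (rd c) (rdv v)"
  unfolding Zv_def rdv_def by (simp add: rd_mult)
lemma rdv_lin: "Zv v \<Longrightarrow> Zv w \<Longrightarrow> c \<in> Z \<Longrightarrow> rdv (v - c *\<^sub>R w) = vadd (rdv v) (vsm (rd c) (rdv w))"
  unfolding Zv_def rdv_def by (simp add: rd_mult rd_diff)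
lemma rdv_minus: "Zv v \<Longrightarrow> rdv (- v) = rdv v"
  unfolding Zv_def rdv_def by (simp add: rd_minus)
lemma rdv_2x: "Zv v \<Longrightarrow> rdv (2 *\<^sub>R v) = zf"
  unfolding Zv_def rdv_def zf_def by simp
lemma rdv_permv_zf: assumes "p permutes UNIV" shows "rdv (permv p w) = zf \<longleftrightarrow> rdv w = zf"
  unfolding rdv_zf using perm_all[OF assms] by auto
lemma half_Zv: assumes "Zv v" "rdv v = zf" shows "Zv ((1/2) *\<^sub>R v)"
  using assms rd_ev unfolding Zv_def rdv_zf by auto

definition cong2g :: "real^4 \<Rightarrow> real^4 \<Rightarrow> bool" where
  "cong2g y z \<longleftrightarrow> (\<forall>i. (y $ i - z $ i) / 2 \<in> Z)"

lemma cong2g_Zv: assumes "cong2g y z" "Zv z" shows "Zv y"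
proof -
  have "y$i = z$i + 2 * ((y $ i - z $ i) / 2)" for i by (simp add: field_simps)
  then show ?thesis using assms unfolding cong2g_def Zv_def by (metis Z_add Z_mult Z_numeral)
qed
lemma cong2g_iff: assumes "Zv y" "Zv z" shows "cong2g y z \<longleftrightarrow> rdv y = rdv z"
proof -
  have "(y $ i - z $ i) / 2 \<in> Z \<longleftrightarrow> rd (y$i) = rd (z$i)" for i
    using assms rd_ev[of "y$i - z$i"] rd_diff[of "y$i" "z$i"] unfolding Zv_def
    by (simp add: fadd_eq0)
  then show ?thesis unfolding cong2g_def rdv_eq by auto
qed
lemma cong2g_0: assumes "Zv y" shows "cong2g y 0 \<longleftrightarrow> rdv y = zf"
  using cong2g_iff[OF assms, of 0] by (simp add: Zv_def rdv_def zf_def)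

end



lemma rdv_one4_aux: "(one4::real^4) $ i = 1"
  unfolding one4_def using exhaust_4[of i] by auto

context gold begin

definition gv :: "real^4" where "gv = vector [0, 1, 1 - t, t]"
definition uvec :: "real \<Rightarrow> real \<Rightarrow> real \<Rightarrow> real^4" where
  "uvec s1 s2 s3 = vector [0, s1, s2 * (1 - t), s3 * t]"
definition Gset :: "(real^4) set" where
  "Gset = {permv p (uvec s1 s2 s3) | p s1 s2 s3. p \<in> evenperms \<and> s1 \<in> {1,-1} \<and> s2 \<in> {1,-1} \<and> s3 \<in> {1,-1}}"
definition Dg :: "(real^4) set" where
  "Dg = DeltaP t (1 - t) - (DeltaP t (1 - t) \<inter> DeltaP (1 - t) t)"
definition repsg :: "real set" where "repsg = {0, 1, t, 1 - t}"
definition spanrepg :: "real^4 \<Rightarrow> real^4 \<Rightarrow> (real^4) set" where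
  "spanrepg u w = {c *\<^sub>R u + d *\<^sub>R w | c d. c \<in> repsg \<and> d \<in> repsg}"
definition unitlatg :: "nat \<Rightarrow> real^4 \<Rightarrow> bool" where
  "unitlatg n x \<longleftrightarrow> (\<forall>i. 2 ^ n * x $ i \<in> Z) \<and> x \<bullet> x = 1"
definition rinz :: "real^4 \<Rightarrow> (real^4) set \<Rightarrow> bool" where
  "rinz y R \<longleftrightarrow> (\<exists>v\<in>R. cong2g y v \<and> \<not> cong2g v 0)"
definition rin :: "real^4 \<Rightarrow> (real^4) set \<Rightarrow> bool" where
  "rin y R \<longleftrightarrow> (\<exists>v\<in>R. cong2g y v)"
definition Sg :: "nat \<Rightarrow> (real^4) set" where
  "Sg n = {x. unitlatg n x \<and> rinz ((2 ^ n) *\<^sub>R x) (spanrepg one4 gv)}"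
definition Sdg :: "nat \<Rightarrow> (real^4) set" where
  "Sdg n = {x. unitlatg n x \<and> rin ((2 ^ n) *\<^sub>R x) {permv p gv | p. p \<in> evenperms}}"
definition Sdg' :: "nat \<Rightarrow> (real^4) set" where
  "Sdg' n = {x. unitlatg n x \<and> rin ((2 ^ n) *\<^sub>R x) {permv p gv | p. p \<in> oddperms}}"

lemma sgn_Z: "s \<in> {1, -1} \<Longrightarrow> s \<in> Z \<and> rd s = F1"
  using rd_minus[of 1] by auto

lemma uvec_Zv: "s1 \<in> {1,-1} \<Longrightarrow> s2 \<in> {1,-1} \<Longrightarrow> s3 \<in> {1,-1} \<Longrightarrow> Zv (uvec s1 s2 s3)"
  unfolding Zv_def uvec_def forall_4 using sgn_Z by auto

lemma rd_uvec: assumes "s1 \<in> {1,-1}" "s2 \<in> {1,-1}" "s3 \<in> {1,-1}"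
  shows "rd (uvec s1 s2 s3 $ m) = gbf m"
proof -
  have "rd (uvec s1 s2 s3 $ m) = gbf m" if "m = 1 \<or> m = 2 \<or> m = 3 \<or> m = 4"
    using that assms sgn_Z[of s1] sgn_Z[of s2] sgn_Z[of s3]
    by (auto simp: uvec_def gbf_def rd_mult rd_minus rd_diff)
  then show ?thesis using exhaust_4 by blast
qed

lemma uvec_dot: assumes "s1 \<in> {1,-1}" "s2 \<in> {1,-1}" "s3 \<in> {1,-1}"
  shows "uvec s1 s2 s3 \<bullet> uvec s1 s2 s3 = 4"
proof -
  have "s1 * s1 = 1" "s2 * s2 = 1" "s3 * s3 = 1" using assms by auto
  have "uvec s1 s2 s3 \<bullet> uvec s1 s2 s3 = (s1 * s1) + (s2 * s2) * ((1 - t) * (1 - t)) + (s3 * s3) * (t * t)"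
    unfolding uvec_def inner4 by (simp add: algebra_simps)
  also have "\<dots> = 1 + (1 - t) * (1 - t) + t * t" using \<open>s1 * s1 = 1\<close> \<open>s2 * s2 = 1\<close> \<open>s3 * s3 = 1\<close> by simp
  also have "\<dots> = 4" using tt by (simp add: algebra_simps)
  finally show ?thesis .
qed

lemma gv_uvec: "gv = uvec 1 1 1" unfolding gv_def uvec_def by simp

lemma rdv_permv_gbf: assumes "\<forall>m. rd (v $ m) = gbf m" shows "rdv (permv p v) = Tp p"
  using assms unfolding rdv_def Tp_def by simp

lemma evenperms_iff: "p \<in> evenperms \<longleftrightarrow> p permutes UNIV \<and> evenperm p"
  unfolding evenperms_def by simp
lemma oddperms_iff: "p \<in> oddperms \<longleftrightarrow> p permutes UNIV \<and> \<not> evenperm p"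
  unfolding oddperms_def by simp

lemma GsetE: assumes "a \<in> Gset"
  obtains p s1 s2 s3 where "a = permv p (uvec s1 s2 s3)" "p permutes UNIV" "evenperm p"
    "s1 \<in> {1,-1}" "s2 \<in> {1,-1}" "s3 \<in> {1,-1}"
  using assms unfolding Gset_def evenperms_iff by blast

lemma Gset_props: assumes "a \<in> Gset" shows "Zv a" "rdv a \<in> EvenT" "a \<bullet> a = 4"
proof -
  obtain p s1 s2 s3 where a: "a = permv p (uvec s1 s2 s3)" "p permutes UNIV" "evenperm p"
    "s1 \<in> {1,-1}" "s2 \<in> {1,-1}" "s3 \<in> {1,-1}" using GsetE[OF assms] by metis
  show "Zv a" using a uvec_Zv Zv_permv by simp
  have "rdv a = Tp p" using a rd_uvec rdv_permv_gbf by simp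
  then show "rdv a \<in> EvenT" using P3 a by simp
  show "a \<bullet> a = 4" using a permv_inner uvec_dot by simp
qed

lemma Gset_I: "p permutes UNIV \<Longrightarrow> evenperm p \<Longrightarrow> s1 \<in> {1,-1} \<Longrightarrow> s2 \<in> {1,-1} \<Longrightarrow> s3 \<in> {1,-1}
  \<Longrightarrow> permv p (uvec s1 s2 s3) \<in> Gset"
  unfolding Gset_def evenperms_iff by blast

lemma two_Z: "(2::real) \<in> Z" by simp

lemma notS1: assumes "s = 1 \<or> s = -1" "\<beta> = (\<chi> j. if j = i then s else 0)"
  shows "rdv (2 *\<^sub>R \<beta>) \<notin> EvenT"
proof -
  have r2: "rd 2 = F0" using rd_of_int[of 2] by simp
  have "rd ((2 *\<^sub>R \<beta>) $ j) = F0" for j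
  proof (cases "j = i")
    case True
    then have "(2 *\<^sub>R \<beta>) $ j = 2 \<or> (2 *\<^sub>R \<beta>) $ j = - 2" using assms by auto
    then show ?thesis using r2 rd_minus[of 2] by auto
  next
    case False
    then show ?thesis using assms by simp
  qed
  then have "rdv (2 *\<^sub>R \<beta>) = zf" using rdv_zf by blast
  then show ?thesis using FA6 by simp
qed

lemma notS2: assumes "\<forall>j. \<beta> $ j = 1/2 \<or> \<beta> $ j = -1/2"
  shows "rdv (2 *\<^sub>R \<beta>) \<notin> EvenT"
proof -
  have "rd ((2 *\<^sub>R \<beta>) $ j) = F1" for j
  proof -
    have "(2 *\<^sub>R \<beta>) $ j = 1 \<or> (2 *\<^sub>R \<beta>) $ j = -1" using assms[rule_format, of j] by auto
    then show ?thesis using rd_minus[of 1] by auto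
  qed
  then have "rdv (2 *\<^sub>R \<beta>) = one_f" unfolding rdv_def one_f_def by simp
  then show ?thesis using FA6 by simp
qed

lemma rd_w_sw: assumes "s1 \<in> {1,-1}" "s2 \<in> {1,-1}" "s3 \<in> {1,-1}"
  shows "rd ((vector [0, s1, s2 * t, s3 * (1 - t)] :: real^4) $ m) = gbf (Transposition.transpose 3 4 m)"
proof -
  have a: "rd s1 = F1" "rd s2 = F1" "rd s3 = F1" "s1 \<in> Z" "s2 \<in> Z" "s3 \<in> Z" using assms sgn_Z by auto
  have "rd ((vector [0, s1, s2 * t, s3 * (1 - t)] :: real^4) $ m) = gbf (Transposition.transpose 3 4 m)"
    if "m = 1 \<or> m = 2 \<or> m = 3 \<or> m = 4"
    using that by (elim disjE) (simp_all add: gbf_def rd_mult a Transposition.transpose_def)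
  then show ?thesis using exhaust_4 by blast
qed

lemma notS3: assumes "\<beta> = permv q ((1/2) *\<^sub>R vector [0, s1, s2 * t, s3 * (1 - t)])"
         "q \<in> evenperms" "s1 \<in> {1,-1}" "s2 \<in> {1,-1}" "s3 \<in> {1,-1}"
  shows "rdv (2 *\<^sub>R \<beta>) \<notin> EvenT"
proof -
  define sw :: "4 \<Rightarrow> 4" where "sw = Transposition.transpose 3 4"
  have qp: "q permutes UNIV" "evenperm q" using assms(2) unfolding evenperms_iff by auto
  have swp: "sw permutes UNIV" "\<not> evenperm sw" unfolding sw_def
    by (simp_all add: permutes_swap_id evenperm_swap)
  have e: "2 *\<^sub>R \<beta> = permv q (vector [0, s1, s2 * t, s3 * (1 - t)])"
    using assms(1) by (simp add: permv_scale)
  have r: "rdv (2 *\<^sub>R \<beta>) = Tp (sw \<circ> q)" unfolding e rdv_def Tp_def sw_def o_apply permv_nth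
    by (simp only: rd_w_sw[OF assms(3-5)])
  have ne: "\<not> evenperm (sw \<circ> q)"
  proof -
    have "permutation q" "permutation sw"
      using permutes_imp_permutation[OF _ qp(1)] permutes_imp_permutation[OF _ swp(1)] by auto
    then show ?thesis using qp swp by (simp add: evenperm_comp)
  qed
  have sp: "sw \<circ> q permutes UNIV" using qp swp permutes_compose by blast
  have "rdv (2 *\<^sub>R \<beta>) \<in> OddT" unfolding r by (rule P3(2)[OF sp ne])
  then show ?thesis using FA10 by blast
qed

lemma DeltaP_not: assumes "\<beta> \<in> DeltaP (1 - t) t" shows "rdv (2 *\<^sub>R \<beta>) \<notin> EvenT"
  using assms unfolding DeltaP_def Un_iff mem_Collect_eq
  apply (elim disjE exE conjE)
     apply (erule notS1[rotated], simp)
    apply (erule notS1[rotated], simp)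
   apply (erule notS2)
  apply (erule notS3; assumption)
  done

lemma Dg_char: "\<alpha> \<in> Dg \<longleftrightarrow> (\<exists>a\<in>Gset. \<alpha> = (1/2) *\<^sub>R a)"
proof
  assume h: "\<alpha> \<in> Dg"
  then have in1: "\<alpha> \<in> DeltaP t (1 - t)" and nin: "\<alpha> \<notin> DeltaP (1 - t) t" unfolding Dg_def by auto
  have "\<not> ((\<exists>i s. (s = 1 \<or> s = -1) \<and> \<alpha> = (\<chi> j. if j = i then s else 0)) \<or> (\<forall>j. \<alpha> $ j = 1/2 \<or> \<alpha> $ j = -1/2))"
    using nin unfolding DeltaP_def by blast
  then obtain p s1 s2 s3 where ps: "\<alpha> = permv p ((1/2) *\<^sub>R vector [0, s1, s2 * (1 - t), s3 * t])"
    "p \<in> evenperms" "s1 \<in> {1,-1}" "s2 \<in> {1,-1}" "s3 \<in> {1,-1}"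
    using in1 unfolding DeltaP_def by blast
  have "permv p (uvec s1 s2 s3) \<in> Gset" unfolding Gset_def using ps(2-5) by blast
  moreover have "\<alpha> = (1/2) *\<^sub>R permv p (uvec s1 s2 s3)" using ps(1) by (simp add: permv_scale uvec_def)
  ultimately show "\<exists>a\<in>Gset. \<alpha> = (1/2) *\<^sub>R a" by blast
next
  assume "\<exists>a\<in>Gset. \<alpha> = (1/2) *\<^sub>R a"
  then obtain a where a: "a \<in> Gset" "\<alpha> = (1/2) *\<^sub>R a" by blast
  obtain p s1 s2 s3 where ap: "a = permv p (uvec s1 s2 s3)" "p permutes UNIV" "evenperm p"
    "s1 \<in> {1,-1}" "s2 \<in> {1,-1}" "s3 \<in> {1,-1}" using GsetE[OF a(1)] by metis
  have "\<alpha> = permv p ((1/2) *\<^sub>R vector [0, s1, s2 * (1 - t), s3 * t])"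
    using ap a(2) by (simp add: permv_scale uvec_def)
  moreover have "p \<in> evenperms" using ap evenperms_iff by blast
  ultimately have "\<alpha> \<in> {permv p ((1/2) *\<^sub>R vector [0, s1, s2 * (1 - t), s3 * t]) | p s1 s2 s3.
        p \<in> evenperms \<and> s1 \<in> {1, -1} \<and> s2 \<in> {1, -1} \<and> s3 \<in> {1, -1}}" using ap by blast
  then have "\<alpha> \<in> DeltaP t (1 - t)" unfolding DeltaP_def by blast
  moreover have "\<alpha> \<notin> DeltaP (1 - t) t"
  proof
    assume "\<alpha> \<in> DeltaP (1 - t) t"
    moreover have "2 *\<^sub>R \<alpha> = a" using a(2) by simp
    ultimately show False using DeltaP_not[of \<alpha>] Gset_props[OF a(1)] by metis
  qed
  ultimately show "\<alpha> \<in> Dg" unfolding Dg_def by blast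
qed

lemma unitlatg_iff: "unitlatg n x \<longleftrightarrow> Zv ((2 ^ n) *\<^sub>R x) \<and> x \<bullet> x = 1"
  unfolding unitlatg_def Zv_def by simp

lemma repsg_Z: "c \<in> repsg \<Longrightarrow> c \<in> Z" unfolding repsg_def by auto
lemma Zv_one4: "Zv one4" unfolding Zv_def by (simp add: rdv_one4_aux)
lemma rdv_one4: "rdv one4 = one_f" unfolding rdv_def one_f_def by (simp add: rdv_one4_aux)
lemma Zv_gv: "Zv gv" unfolding gv_uvec by (rule uvec_Zv) auto
lemma rdv_gv: "rdv gv = gb" unfolding gv_def rdv_def gb_def by simp

lemma span_props: assumes "v \<in> spanrepg one4 gv" shows "Zv v" "rdv v \<in> Afin"
proof -
  obtain c d where v: "v = c *\<^sub>R one4 + d *\<^sub>R gv" "c \<in> repsg" "d \<in> repsg"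
    using assms unfolding spanrepg_def by blast
  show "Zv v" using v repsg_Z Zv_one4 Zv_gv by (simp add: Zv_add Zv_scale)
  have "rdv v = vadd (vsm (rd c) one_f) (vsm (rd d) gb)" using v repsg_Z Zv_one4 Zv_gv
    by (simp add: rdv_add rdv_scale Zv_scale rdv_one4 rdv_gv)
  then show "rdv v \<in> Afin" using Afin_span by simp
qed

lemma L_repsg: "L f \<in> repsg" unfolding repsg_def by (cases f) auto

lemma span_ex: assumes "f \<in> Afin" shows "\<exists>v\<in>spanrepg one4 gv. Zv v \<and> rdv v = f"
proof -
  obtain c d where f: "f = vadd (vsm c one_f) (vsm d gb)" using Afin_span_ex[OF assms] by blast
  define v where "v = L c *\<^sub>R one4 + L d *\<^sub>R gv"
  have "v \<in> spanrepg one4 gv" unfolding v_def spanrepg_def using L_repsg by blast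
  moreover have "Zv v" unfolding v_def using Zv_one4 Zv_gv by (simp add: Zv_add Zv_scale)
  moreover have "rdv v = f" unfolding v_def f using Zv_one4 Zv_gv
    by (simp add: rdv_add rdv_scale Zv_scale rdv_one4 rdv_gv)
  ultimately show ?thesis by blast
qed

lemma Sg_iff: "x \<in> Sg n \<longleftrightarrow> Zv ((2 ^ n) *\<^sub>R x) \<and> x \<bullet> x = 1 \<and> rdv ((2 ^ n) *\<^sub>R x) \<in> Afin \<and> rdv ((2 ^ n) *\<^sub>R x) \<noteq> zf"
  (is "_ \<longleftrightarrow> Zv ?y \<and> _ \<and> _ \<and> _")
proof
  assume "x \<in> Sg n"
  then have u: "Zv ?y" "x \<bullet> x = 1" and r: "rinz ?y (spanrepg one4 gv)"
    unfolding Sg_def unitlatg_iff by auto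
  obtain v where v: "v \<in> spanrepg one4 gv" "cong2g ?y v" "\<not> cong2g v 0" using r unfolding rinz_def by blast
  have "Zv v" "rdv v \<in> Afin" using span_props[OF v(1)] by auto
  then show "Zv ?y \<and> x \<bullet> x = 1 \<and> rdv ?y \<in> Afin \<and> rdv ?y \<noteq> zf"
    using u v cong2g_iff cong2g_0 by metis
next
  assume h: "Zv ?y \<and> x \<bullet> x = 1 \<and> rdv ?y \<in> Afin \<and> rdv ?y \<noteq> zf"
  then obtain v where v: "v \<in> spanrepg one4 gv" "Zv v" "rdv v = rdv ?y" using span_ex by metis
  then have "cong2g ?y v \<and> \<not> cong2g v 0" using h cong2g_iff cong2g_0 by metis
  then show "x \<in> Sg n" unfolding Sg_def unitlatg_iff rinz_def using h v by blast
qed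

lemma Sdg_iff: "x \<in> Sdg n \<longleftrightarrow> Zv ((2 ^ n) *\<^sub>R x) \<and> x \<bullet> x = 1 \<and> rdv ((2 ^ n) *\<^sub>R x) \<in> EvenT"
  (is "_ \<longleftrightarrow> Zv ?y \<and> _ \<and> _")
proof
  assume "x \<in> Sdg n"
  then have u: "Zv ?y" "x \<bullet> x = 1" and r: "rin ?y {permv p gv | p. p \<in> evenperms}"
    unfolding Sdg_def unitlatg_iff by auto
  obtain p where p: "p \<in> evenperms" "cong2g ?y (permv p gv)" using r unfolding rin_def by blast
  have "Zv (permv p gv)" using Zv_gv Zv_permv by blast
  moreover have "rdv (permv p gv) = Tp p" using rdv_permv_gbf rd_uvec gv_uvec by simp
  ultimately show "Zv ?y \<and> x \<bullet> x = 1 \<and> rdv ?y \<in> EvenT" using u p cong2g_iff P3 evenperms_iff by metis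
next
  assume h: "Zv ?y \<and> x \<bullet> x = 1 \<and> rdv ?y \<in> EvenT"
  then obtain p where p: "p permutes UNIV" "evenperm p" "Tp p = rdv ?y" using P4e by metis
  have "Zv (permv p gv)" using Zv_gv Zv_permv by blast
  moreover have "rdv (permv p gv) = Tp p" using rdv_permv_gbf rd_uvec gv_uvec by simp
  ultimately have "cong2g ?y (permv p gv)" using h p cong2g_iff by metis
  then show "x \<in> Sdg n" unfolding Sdg_def unitlatg_iff rin_def using h p evenperms_iff by blast
qed

lemma Sdg'_iff: "x \<in> Sdg' n \<longleftrightarrow> Zv ((2 ^ n) *\<^sub>R x) \<and> x \<bullet> x = 1 \<and> rdv ((2 ^ n) *\<^sub>R x) \<in> OddT"
  (is "_ \<longleftrightarrow> Zv ?y \<and> _ \<and> _")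
proof
  assume "x \<in> Sdg' n"
  then have u: "Zv ?y" "x \<bullet> x = 1" and r: "rin ?y {permv p gv | p. p \<in> oddperms}"
    unfolding Sdg'_def unitlatg_iff by auto
  obtain p where p: "p \<in> oddperms" "cong2g ?y (permv p gv)" using r unfolding rin_def by blast
  have "Zv (permv p gv)" using Zv_gv Zv_permv by blast
  moreover have "rdv (permv p gv) = Tp p" using rdv_permv_gbf rd_uvec gv_uvec by simp
  ultimately show "Zv ?y \<and> x \<bullet> x = 1 \<and> rdv ?y \<in> OddT" using u p cong2g_iff P3 oddperms_iff by metis
next
  assume h: "Zv ?y \<and> x \<bullet> x = 1 \<and> rdv ?y \<in> OddT"
  then obtain p where p: "p permutes UNIV" "\<not> evenperm p" "Tp p = rdv ?y" using P4o by metis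
  have "Zv (permv p gv)" using Zv_gv Zv_permv by blast
  moreover have "rdv (permv p gv) = Tp p" using rdv_permv_gbf rd_uvec gv_uvec by simp
  ultimately have "cong2g ?y (permv p gv)" using h p cong2g_iff by metis
  then show "x \<in> Sdg' n" unfolding Sdg'_def unitlatg_iff rin_def using h p oddperms_iff by blast
qed

end



lemma permv_id: "permv id v = v" by (simp add: vec_eq_iff)

context gold begin

lemma C1: assumes "Zv y" "rdv y \<in> Afin" "a \<in> Gset"
  shows "(y \<bullet> a) / 2 \<in> Z" "Zv (y - ((y \<bullet> a) / 2) *\<^sub>R a)"
    "rdv (y - ((y \<bullet> a) / 2) *\<^sub>R a) = vadd (rdv y) (vsm (rd ((y \<bullet> a) / 2)) (rdv a))"
    "rdv (y - ((y \<bullet> a) / 2) *\<^sub>R a) \<in> Afin"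
proof -
  have a: "Zv a" "rdv a \<in> EvenT" using Gset_props assms(3) by auto
  have "rd (y \<bullet> a) = F0" using rd_dot[OF assms(1) a(1)] FA1 assms(2) a(2) by simp
  then show c: "(y \<bullet> a) / 2 \<in> Z" using rd_ev Zv_dot assms(1) a(1) by blast
  show "Zv (y - ((y \<bullet> a) / 2) *\<^sub>R a)" using Zv_diff Zv_scale c a assms by auto
  show eq: "rdv (y - ((y \<bullet> a) / 2) *\<^sub>R a) = vadd (rdv y) (vsm (rd ((y \<bullet> a) / 2)) (rdv a))"
    using rdv_lin assms(1) a(1) c by blast
  show "rdv (y - ((y \<bullet> a) / 2) *\<^sub>R a) \<in> Afin" unfolding eq using FA2 assms(2) a(2) by blast
qed

lemma half_unit: assumes "a \<in> Gset" shows "((1/2) *\<^sub>R a) \<bullet> ((1/2) *\<^sub>R a) = 1"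
  using Gset_props(3)[OF assms] by simp

lemma refl_scaled: "(c::real) *\<^sub>R reflect ((1/2) *\<^sub>R a) x = c *\<^sub>R x - ((c *\<^sub>R x \<bullet> a) / 2) *\<^sub>R a"
  using reflect_scale[of "(1/2) *\<^sub>R a" c x] reflect_half[of a "c *\<^sub>R x"] by simp

lemma R2v: assumes "Zv w" "(w \<bullet> w) / 4 \<in> Z" shows "rdv w \<in> Afin \<union> Apfin"
proof -
  have wz: "w $ i \<in> Z" for i using assms(1) unfolding Zv_def by blast
  obtain e1 where e1: "e1 \<in> Z" "w$1 * w$1 = of_int (qa (rd (w$1))) + of_int (qb (rd (w$1))) * t + 4 * e1"
    using sq_lift[OF wz] by blast
  obtain e2 where e2: "e2 \<in> Z" "w$2 * w$2 = of_int (qa (rd (w$2))) + of_int (qb (rd (w$2))) * t + 4 * e2"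
    using sq_lift[OF wz] by blast
  obtain e3 where e3: "e3 \<in> Z" "w$3 * w$3 = of_int (qa (rd (w$3))) + of_int (qb (rd (w$3))) * t + 4 * e3"
    using sq_lift[OF wz] by blast
  obtain e4 where e4: "e4 \<in> Z" "w$4 * w$4 = of_int (qa (rd (w$4))) + of_int (qb (rd (w$4))) * t + 4 * e4"
    using sq_lift[OF wz] by blast
  define A where "A = qa (rd (w$1)) + qa (rd (w$2)) + qa (rd (w$3)) + qa (rd (w$4))"
  define B where "B = qb (rd (w$1)) + qb (rd (w$2)) + qb (rd (w$3)) + qb (rd (w$4))"
  have "w \<bullet> w = of_int A + of_int B * t + 4 * (e1 + e2 + e3 + e4)"
    unfolding inner4 e1(2) e2(2) e3(2) e4(2) A_def B_def by (simp add: algebra_simps)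
  then have "(of_int A + of_int B * t) / 4 = (w \<bullet> w) / 4 - (e1 + e2 + e3 + e4)" by (simp add: field_simps)
  also have "\<dots> \<in> Z" using assms(2) e1 e2 e3 e4 by auto
  finally have "4 dvd A \<and> 4 dvd B" by (rule four_dvd)
  then show ?thesis unfolding rdv_def A_def B_def using R2fin by blast
qed

lemma partI_main: assumes n: "n \<ge> 2" and x: "x \<in> Sg n" and a: "a \<in> Gset"
  shows "(rdv ((2 ^ n) *\<^sub>R reflect ((1/2) *\<^sub>R a) x) \<noteq> zf \<longrightarrow> reflect ((1/2) *\<^sub>R a) x \<in> Sg n)
       \<and> (rdv ((2 ^ n) *\<^sub>R reflect ((1/2) *\<^sub>R a) x) = zf \<longrightarrow> reflect ((1/2) *\<^sub>R a) x \<in> Sdg' (n - 1))"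
proof -
  define \<alpha> where "\<alpha> = (1/2) *\<^sub>R a"
  define y where "y = (2 ^ n) *\<^sub>R x"
  define r where "r = reflect \<alpha> x"
  have hy: "Zv y" "x \<bullet> x = 1" "rdv y \<in> Afin" "rdv y \<noteq> zf" using x unfolding Sg_iff y_def by auto
  have aa: "\<alpha> \<bullet> \<alpha> = 1" unfolding \<alpha>_def using half_unit[OF a] .
  define y' where "y' = y - ((y \<bullet> a) / 2) *\<^sub>R a"
  have hr: "(2 ^ n) *\<^sub>R r = y'" unfolding r_def y'_def y_def \<alpha>_def by (rule refl_scaled)
  have y'Z: "Zv y'" "rdv y' \<in> Afin" unfolding y'_def using C1[OF hy(1) hy(3) a] by auto
  have rr: "r \<bullet> r = 1" unfolding r_def using reflect_norm[OF aa] hy(2) by simp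
  have c1: "rdv y' \<noteq> zf \<longrightarrow> r \<in> Sg n" using Sg_iff hr y'Z rr by simp
  have c2: "r \<in> Sdg' (n - 1)" if z: "rdv y' = zf"
  proof -
    obtain m where m: "n = m + 2" using n by (metis add.commute le_Suc_ex)
    define w where "w = (1/2) *\<^sub>R y'"
    have wZ: "Zv w" unfolding w_def using half_Zv y'Z z by blast
    have w2: "w = (2 ^ (n - 1)) *\<^sub>R r" unfolding w_def hr[symmetric] m by simp
    have ww: "w \<bullet> w = (2 ^ (n - 1)) * (2 ^ (n - 1))" unfolding w2 using rr by simp
    have "(w \<bullet> w) / 4 = 4 ^ m" unfolding ww m by (simp add: power_mult_distrib[symmetric] power_add)
    then have "(w \<bullet> w) / 4 \<in> Z" by simp
    then have wA: "rdv w \<in> Afin \<union> Apfin" using R2v wZ by blast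
    have "rdv w \<notin> Afin"
    proof
      assume wA': "rdv w \<in> Afin"
      have "Zv (w - ((w \<bullet> a) / 2) *\<^sub>R a)" using C1[OF wZ wA' a] by simp
      moreover have "w - ((w \<bullet> a) / 2) *\<^sub>R a = (2 ^ (n - 1)) *\<^sub>R x"
        using refl_scaled[of "2 ^ (n - 1)" a r] reflect_invol[OF aa, of x] unfolding w2 r_def \<alpha>_def by simp
      ultimately have zz: "Zv ((2 ^ (n - 1)) *\<^sub>R x)" by simp
      have yy: "y = 2 *\<^sub>R ((2 ^ (n - 1)) *\<^sub>R x)" unfolding y_def m by simp
      have "rdv y = zf" unfolding yy using zz by (rule rdv_2x)
      then show False using hy by simp
    qed
    then have "rdv w \<in> OddT" using wA FA4 by blast
    then show "r \<in> Sdg' (n - 1)" unfolding Sdg'_iff using wZ w2 rr by simp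
  qed
  show ?thesis using c1 c2 hr unfolding r_def \<alpha>_def by simp
qed

lemma partI: assumes "n \<ge> 2" "x \<in> Sg n" "\<alpha> \<in> Dg" shows "reflect \<alpha> x \<in> Sg n \<union> Sdg' (n - 1)"
proof -
  obtain a where a: "a \<in> Gset" "\<alpha> = (1/2) *\<^sub>R a" using assms(3) Dg_char by blast
  show ?thesis using partI_main[OF assms(1,2) a(1)] unfolding a(2) by blast
qed

lemma Sdg_sub: "x \<in> Sdg n \<Longrightarrow> x \<in> Sg n"
  unfolding Sg_iff Sdg_iff using FA6(1)[of "rdv ((2 ^ n) *\<^sub>R x)"] FA6(2) by auto

lemma partIIa: assumes "n \<ge> 2" "x \<in> Sg n - Sdg n" "\<alpha> \<in> Dg" shows "reflect \<alpha> x \<in> Sg n"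
proof -
  obtain a where a: "a \<in> Gset" "\<alpha> = (1/2) *\<^sub>R a" using assms(3) Dg_char by blast
  define y where "y = (2 ^ n) *\<^sub>R x"
  have hy: "Zv y" "x \<bullet> x = 1" "rdv y \<in> Afin" "rdv y \<noteq> zf" using DiffD1[OF assms(2)] unfolding Sg_iff y_def by auto
  have ne: "rdv y \<notin> EvenT" using DiffD2[OF assms(2)] hy unfolding Sdg_iff y_def by auto
  have "rdv (y - ((y \<bullet> a) / 2) *\<^sub>R a) \<noteq> zf"
    unfolding C1(3)[OF hy(1) hy(3) a(1)] using FA5a hy ne Gset_props(2)[OF a(1)] by blast
  then have "rdv ((2 ^ n) *\<^sub>R reflect \<alpha> x) \<noteq> zf" unfolding a(2) refl_scaled y_def .
  then show ?thesis using partI_main[OF assms(1) _ a(1)] assms(2) unfolding a(2) by blast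
qed

lemma rdv_uvec: "s1 \<in> {1,-1} \<Longrightarrow> s2 \<in> {1,-1} \<Longrightarrow> s3 \<in> {1,-1} \<Longrightarrow> rdv (uvec s1 s2 s3) = gb"
  using rd_uvec unfolding rdv_def gb_def gbf_def by simp

lemma partIIb_aux: assumes "x \<in> Sg n - Sdg n" "a \<in> Gset" "rdv a = gb"
  "rd ((((2 ^ n) *\<^sub>R x) \<bullet> a) / 2) \<noteq> F0"
  shows "reflect ((1/2) *\<^sub>R a) x \<in> Sdg n"
proof -
  define y where "y = (2 ^ n) *\<^sub>R x"
  have hy: "Zv y" "x \<bullet> x = 1" "rdv y \<in> Afin" "rdv y \<noteq> zf" using DiffD1[OF assms(1)] unfolding Sg_iff y_def by auto
  have ne: "rdv y \<notin> EvenT" using DiffD2[OF assms(1)] hy unfolding Sdg_iff y_def by auto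
  have "rdv (y - ((y \<bullet> a) / 2) *\<^sub>R a) \<in> EvenT"
    unfolding C1(3)[OF hy(1) hy(3) assms(2)] assms(3) using FA5b hy ne assms(4) unfolding y_def by blast
  moreover have "Zv (y - ((y \<bullet> a) / 2) *\<^sub>R a)" using C1[OF hy(1) hy(3) assms(2)] by simp
  moreover have "reflect ((1/2) *\<^sub>R a) x \<bullet> reflect ((1/2) *\<^sub>R a) x = 1"
    using reflect_norm[OF half_unit[OF assms(2)]] hy(2) by simp
  ultimately show ?thesis unfolding Sdg_iff refl_scaled y_def by simp
qed

lemma partIIb: assumes "x \<in> Sg n - Sdg n" shows "\<exists>\<alpha>\<in>Dg. reflect \<alpha> x \<in> Sdg n"
proof -
  define y where "y = (2 ^ n) *\<^sub>R x"
  have hy: "Zv y" "x \<bullet> x = 1" "rdv y \<in> Afin" "rdv y \<noteq> zf" using DiffD1[OF assms(1)] unfolding Sg_iff y_def by auto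
  have ne: "rdv y \<notin> EvenT" using DiffD2[OF assms(1)] hy unfolding Sdg_iff y_def by auto
  define a0 where "a0 = uvec 1 1 1"
  define a1 where "a1 = uvec (-1) 1 1"
  have idp: "id permutes UNIV" "evenperm id" by (simp_all add: permutes_id)
  have g0: "a0 \<in> Gset" unfolding a0_def using Gset_I[OF idp, of 1 1 1] by (simp add: permv_id)
  have g1: "a1 \<in> Gset" unfolding a1_def using Gset_I[OF idp, of "-1" 1 1] by (simp add: permv_id)
  have r0: "rdv a0 = gb" "rdv a1 = gb" unfolding a0_def a1_def by (simp_all add: rdv_uvec)
  have cz: "(y \<bullet> a0) / 2 \<in> Z" "(y \<bullet> a1) / 2 \<in> Z" using C1(1) hy g0 g1 by auto
  have e: "(y \<bullet> a0) / 2 = (y \<bullet> a1) / 2 + y $ 2" unfolding a0_def a1_def uvec_def inner4 by (simp add: field_simps)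
  have y2: "y $ 2 \<in> Z" using hy(1) unfolding Zv_def by blast
  have "rd ((y \<bullet> a0) / 2) = fadd (rd ((y \<bullet> a1) / 2)) (rd (y $ 2))"
    unfolding e by (rule rd_add[OF cz(2) y2])
  moreover have "rd (y $ 2) \<noteq> F0" using FA5c hy ne unfolding rdv_def by force
  ultimately have "rd ((y \<bullet> a0) / 2) \<noteq> F0 \<or> rd ((y \<bullet> a1) / 2) \<noteq> F0" by auto
  then show ?thesis
  proof
    assume "rd ((y \<bullet> a0) / 2) \<noteq> F0"
    then have "reflect ((1/2) *\<^sub>R a0) x \<in> Sdg n" using partIIb_aux[OF assms g0 r0(1)] y_def by simp
    moreover have "(1/2) *\<^sub>R a0 \<in> Dg" using Dg_char g0 by blast
    ultimately show ?thesis by blast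
  next
    assume "rd ((y \<bullet> a1) / 2) \<noteq> F0"
    then have "reflect ((1/2) *\<^sub>R a1) x \<in> Sdg n" using partIIb_aux[OF assms g1 r0(2)] y_def by simp
    moreover have "(1/2) *\<^sub>R a1 \<in> Dg" using Dg_char g1 by blast
    ultimately show ?thesis by blast
  qed
qed

end



lemma FL: "l \<noteq> F0 \<Longrightarrow> e1 \<in> {F0,F1} \<Longrightarrow> e2 \<in> {F0,F1} \<Longrightarrow> e3 \<in> {F0,F1} \<Longrightarrow>
  fadd (fadd (fmul l e1) (fmul (fmul l FV) (fmul FV e2))) (fmul (fmul l FW) (fmul FW e3)) = F0 \<Longrightarrow>
  e1 = e2 \<and> e2 = e3"
  by (cases l) auto

lemma FSE: "l \<noteq> F0 \<Longrightarrow> rc = l \<or> fadd rc l = l \<or> fadd rc (fmul FV (fmul l FV)) = l \<or> fadd rc (fmul FW (fmul l FW)) = l"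
  by (cases l; cases rc) auto

lemma Finv: "m \<noteq> F0 \<Longrightarrow> \<exists>l. l \<noteq> F0 \<and> fmul l m = F1"
  by (cases m) auto

lemma vsm_vsm: "vsm l (vsm m e) = vsm (fmul l m) e"
  by (cases e) (simp add: fmul_assoc)
lemma fmul_1l: "fmul F1 x = x" by (cases x) auto
lemma vsm_1: "vsm F1 e = e" by (cases e) (simp add: fmul_1l)

lemma fdot_l: "fdot (fmul l F0, fmul l F1, fmul l FV, fmul l FW) gb = F0"
  unfolding gb_def by (cases l) auto

context gold begin

lemma uvec_neg: "uvec (- s1) (- s2) (- s3) = - uvec s1 s2 s3"
  unfolding uvec_def by (simp add: vec_eq_iff forall_4)

lemma dlem: assumes "s \<in> {1,-1}" "s' \<in> {1,-1}"
  shows "(s - s') / 2 \<in> Z" "rd ((s - s') / 2) = (if s = s' then F0 else F1)" "s \<noteq> s' \<Longrightarrow> s' = - s"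
  using assms rd_minus[of 1] by auto

lemma K: assumes "Zv z" "s1 \<in> {1,-1}" "s2 \<in> {1,-1}" "s3 \<in> {1,-1}" "c \<in> Z"
  "rdv (z - c *\<^sub>R uvec s1 s2 s3) = zf"
  shows "rd (z $ m) = fmul (rd c) (gbf m)"
proof -
  have u: "Zv (uvec s1 s2 s3)" using uvec_Zv assms by blast
  have "rd (z $ m - c * uvec s1 s2 s3 $ m) = F0" using assms(6) unfolding rdv_zf by simp
  moreover have "rd (z $ m - c * uvec s1 s2 s3 $ m) = fadd (rd (z $ m)) (fmul (rd c) (gbf m))"
    using assms u rd_uvec unfolding Zv_def by (simp add: rd_diff rd_mult)
  ultimately show ?thesis by (simp add: fadd_eq0)
qed

lemma K': assumes "Zv z" "s1 \<in> {1,-1}" "s2 \<in> {1,-1}" "s3 \<in> {1,-1}" "c \<in> Z"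
  "\<forall>m. rd (z $ m) = fmul l (gbf m)" "rd c = l"
  shows "rdv (z - c *\<^sub>R uvec s1 s2 s3) = zf"
proof -
  have u: "Zv (uvec s1 s2 s3)" using uvec_Zv assms by blast
  have "rd (z $ m - c * uvec s1 s2 s3 $ m) = F0" for m
    using assms u rd_uvec unfolding Zv_def by (simp add: rd_diff rd_mult)
  then show ?thesis unfolding rdv_zf by simp
qed

lemma SL: assumes z: "Zv z" "rdv z \<noteq> zf"
  and s: "s1 \<in> {1,-1}" "s2 \<in> {1,-1}" "s3 \<in> {1,-1}"
  and s': "s1' \<in> {1,-1}" "s2' \<in> {1,-1}" "s3' \<in> {1,-1}"
  and c: "(z \<bullet> uvec s1 s2 s3) / 2 \<in> Z" "(z \<bullet> uvec s1' s2' s3') / 2 \<in> Z"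
  and r: "rdv (z - ((z \<bullet> uvec s1 s2 s3) / 2) *\<^sub>R uvec s1 s2 s3) = zf"
         "rdv (z - ((z \<bullet> uvec s1' s2' s3') / 2) *\<^sub>R uvec s1' s2' s3') = zf"
  shows "uvec s1' s2' s3' = uvec s1 s2 s3 \<or> uvec s1' s2' s3' = - uvec s1 s2 s3"
proof -
  define c1 where "c1 = (z \<bullet> uvec s1 s2 s3) / 2"
  define c2 where "c2 = (z \<bullet> uvec s1' s2' s3') / 2"
  have k1: "rd (z $ m) = fmul (rd c1) (gbf m)" for m using K[OF z(1) s c(1) r(1)] unfolding c1_def .
  have k2: "rd (z $ m) = fmul (rd c2) (gbf m)" for m using K[OF z(1) s' c(2) r(2)] unfolding c2_def .
  have eqc: "rd c1 = rd c2" using k1[of 2] k2[of 2] by (simp add: gbf_def)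
  have l0: "rd c1 \<noteq> F0"
  proof
    assume "rd c1 = F0"
    then have "rdv z = zf" unfolding rdv_zf using k1 by simp
    then show False using z(2) by simp
  qed
  define d1 where "d1 = (s1 - s1') / 2"
  define d2 where "d2 = (s2 - s2') / 2"
  define d3 where "d3 = (s3 - s3') / 2"
  have dZ: "d1 \<in> Z" "d2 \<in> Z" "d3 \<in> Z" unfolding d1_def d2_def d3_def
    using dlem(1)[OF s(1) s'(1)] dlem(1)[OF s(2) s'(2)] dlem(1)[OF s(3) s'(3)] by auto
  have r1: "rd d1 = (if s1 = s1' then F0 else F1)" "rd d2 = (if s2 = s2' then F0 else F1)"
    "rd d3 = (if s3 = s3' then F0 else F1)" unfolding d1_def d2_def d3_def
    using dlem(2)[OF s(1) s'(1)] dlem(2)[OF s(2) s'(2)] dlem(2)[OF s(3) s'(3)] by auto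
  have zz: "z $ 2 \<in> Z" "z $ 3 \<in> Z" "z $ 4 \<in> Z" using z(1) unfolding Zv_def by blast+
  have "c1 - c2 = z $ 2 * d1 + z $ 3 * ((1 - t) * d2) + z $ 4 * (t * d3)"
    unfolding c1_def c2_def d1_def d2_def d3_def uvec_def inner4 by (simp add: field_simps)
  moreover have "rd (z $ 2 * d1 + z $ 3 * ((1 - t) * d2) + z $ 4 * (t * d3)) =
     fadd (fadd (fmul (rd (z $ 2)) (rd d1)) (fmul (rd (z $ 3)) (fmul FV (rd d2))))
       (fmul (rd (z $ 4)) (fmul FW (rd d3)))"
  proof -
    have A: "z $ 2 * d1 \<in> Z" "z $ 3 * ((1 - t) * d2) \<in> Z" "z $ 4 * (t * d3) \<in> Z" using dZ zz by auto
    have "rd (z $ 2 * d1 + z $ 3 * ((1 - t) * d2) + z $ 4 * (t * d3)) =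
      fadd (fadd (rd (z $ 2 * d1)) (rd (z $ 3 * ((1 - t) * d2)))) (rd (z $ 4 * (t * d3)))"
      using rd_add[OF Z_add[OF A(1) A(2)] A(3)] rd_add[OF A(1) A(2)] by simp
    also have "rd (z $ 2 * d1) = fmul (rd (z $ 2)) (rd d1)" using rd_mult zz dZ by blast
    also have "rd (z $ 3 * ((1 - t) * d2)) = fmul (rd (z $ 3)) (fmul FV (rd d2))"
      using rd_mult[OF zz(2) Z_mult[OF Z_1mt dZ(2)]] rd_mult[OF Z_1mt dZ(2)] by simp
    also have "rd (z $ 4 * (t * d3)) = fmul (rd (z $ 4)) (fmul FW (rd d3))"
      using rd_mult[OF zz(3) Z_mult[OF Z_t dZ(3)]] rd_mult[OF Z_t dZ(3)] by simp
    finally show ?thesis .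
  qed
  ultimately have "rd (c1 - c2) = fadd (fadd (fmul (rd (z $ 2)) (rd d1)) (fmul (rd (z $ 3)) (fmul FV (rd d2))))
       (fmul (rd (z $ 4)) (fmul FW (rd d3)))" by simp
  moreover have "rd (c1 - c2) = F0" using eqc c unfolding c1_def c2_def by (simp add: rd_diff)
  ultimately have "fadd (fadd (fmul (rd c1) (rd d1)) (fmul (fmul (rd c1) FV) (fmul FV (rd d2))))
       (fmul (fmul (rd c1) FW) (fmul FW (rd d3))) = F0"
    using k1[of 2] k1[of 3] k1[of 4] by (simp add: gbf_def)
  moreover have "rd d1 \<in> {F0,F1}" "rd d2 \<in> {F0,F1}" "rd d3 \<in> {F0,F1}"
    unfolding r1 by auto
  ultimately have de: "rd d1 = rd d2 \<and> rd d2 = rd d3" using FL[OF l0] by blast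
  show ?thesis
  proof (cases "s1 = s1'")
    case True
    then have "rd d1 = F0" using r1(1) by simp
    then have "rd d2 = F0" "rd d3 = F0" using de by simp_all
    then have "s2 = s2'" "s3 = s3'" using r1(2,3) by (metis f4.distinct(1))+
    then show ?thesis using True by simp
  next
    case False
    then have "rd d1 = F1" using r1(1) by simp
    then have "rd d2 = F1" "rd d3 = F1" using de by simp_all
    then have "s2 \<noteq> s2'" "s3 \<noteq> s3'" using r1(2,3) by (metis f4.distinct(1))+
    then have "s1' = - s1" "s2' = - s2" "s3' = - s3"
      using False dlem(3)[OF s(1) s'(1)] dlem(3)[OF s(2) s'(2)] dlem(3)[OF s(3) s'(3)] by auto
    then show ?thesis using uvec_neg by simp
  qed
qed

lemma SE: assumes z: "Zv z" and l: "l \<noteq> F0" and k: "\<forall>m. rd (z $ m) = fmul l (gbf m)"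
  shows "\<exists>s1 s2 s3. s1 \<in> {1,-1} \<and> s2 \<in> {1,-1} \<and> s3 \<in> {1,-1} \<and> (z \<bullet> uvec s1 s2 s3) / 2 \<in> Z
     \<and> rdv (z - ((z \<bullet> uvec s1 s2 s3) / 2) *\<^sub>R uvec s1 s2 s3) = zf"
proof -
  have zz: "z $ 2 \<in> Z" "z $ 3 \<in> Z" "z $ 4 \<in> Z" using z unfolding Zv_def by blast+
  have rz: "rdv z = (fmul l F0, fmul l F1, fmul l FV, fmul l FW)" unfolding rdv_def using k by (simp add: gbf_def)
  have "rd (z \<bullet> uvec 1 1 1) = F0" using rd_dot[OF z uvec_Zv[of 1 1 1]] rdv_uvec[of 1 1 1] rz fdot_l by simp
  then have c0: "(z \<bullet> uvec 1 1 1) / 2 \<in> Z" using rd_ev Zv_dot z uvec_Zv[of 1 1 1] by simp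
  define c0 where "c0 = (z \<bullet> uvec 1 1 1) / 2"
  have e1: "(z \<bullet> uvec (-1) 1 1) / 2 = c0 - z $ 2" unfolding c0_def uvec_def inner4 by (simp add: field_simps)
  have e2: "(z \<bullet> uvec 1 (-1) 1) / 2 = c0 - (1 - t) * z $ 3" unfolding c0_def uvec_def inner4 by (simp add: field_simps)
  have e3: "(z \<bullet> uvec 1 1 (-1)) / 2 = c0 - t * z $ 4" unfolding c0_def uvec_def inner4 by (simp add: field_simps)
  have cz: "c0 \<in> Z" using c0 unfolding c0_def .
  have rz2: "rd (z $ 2) = l" "rd (z $ 3) = fmul l FV" "rd (z $ 4) = fmul l FW" using k by (simp_all add: gbf_def)
  consider "rd c0 = l" | "fadd (rd c0) l = l" | "fadd (rd c0) (fmul FV (fmul l FV)) = l"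
    | "fadd (rd c0) (fmul FW (fmul l FW)) = l" using FSE[OF l] by blast
  then show ?thesis
  proof cases
    case 1
    then show ?thesis using K'[OF z _ _ _ cz k] cz unfolding c0_def by (intro exI[of _ 1]) auto
  next
    case 2
    have cZ: "c0 - z $ 2 \<in> Z" using cz zz by simp
    have "rd (c0 - z $ 2) = l" using 2 cz zz rz2 by (simp add: rd_diff)
    then show ?thesis using K'[OF z _ _ _ cZ k] cZ unfolding e1[symmetric]
      by (intro exI[of _ "-1"] exI[of _ 1]) auto
  next
    case 3
    have cZ: "c0 - (1 - t) * z $ 3 \<in> Z" using cz zz by simp
    have "rd (c0 - (1 - t) * z $ 3) = l" using 3 cz zz rz2 by (simp add: rd_diff rd_mult)
    then show ?thesis using K'[OF z _ _ _ cZ k] cZ unfolding e2[symmetric]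
      by (intro exI[of _ 1] exI[of _ "-1"]) auto
  next
    case 4
    have cZ: "c0 - t * z $ 4 \<in> Z" using cz zz by simp
    have "rd (c0 - t * z $ 4) = l" using 4 cz zz rz2 by (simp add: rd_diff rd_mult)
    then show ?thesis using K'[OF z _ _ _ cZ k] cZ unfolding e3[symmetric]
      by (intro exI[of _ 1] exI[of _ 1] exI[of _ "-1"]) auto
  qed
qed

end



context gold begin

lemma transport: assumes p: "p permutes UNIV"
  shows "y \<bullet> permv p u = permv (inv p) y \<bullet> u"
    "y - c *\<^sub>R permv p u = permv p (permv (inv p) y - c *\<^sub>R u)"
proof -
  have y: "y = permv p (permv (inv p) y)" using permv_inv[OF p] by simp
  show "y \<bullet> permv p u = permv (inv p) y \<bullet> u" by (subst y) (rule permv_inner[OF p])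
  show "y - c *\<^sub>R permv p u = permv p (permv (inv p) y - c *\<^sub>R u)"
    by (subst (1) y) (simp add: permv_diff permv_scale)
qed

lemma U: assumes y: "Zv y" "rdv y \<noteq> zf" "rdv y \<in> Afin" and a: "a \<in> Gset" and b: "b \<in> Gset"
  and ra: "rdv (y - ((y \<bullet> a) / 2) *\<^sub>R a) = zf" and rb: "rdv (y - ((y \<bullet> b) / 2) *\<^sub>R b) = zf"
  and ab: "rdv a = rdv b"
  shows "b = a \<or> b = - a"
proof -
  obtain p s1 s2 s3 where ap: "a = permv p (uvec s1 s2 s3)" "p permutes UNIV" "evenperm p"
    "s1 \<in> {1,-1}" "s2 \<in> {1,-1}" "s3 \<in> {1,-1}" using GsetE[OF a] by metis
  obtain q s1' s2' s3' where bq: "b = permv q (uvec s1' s2' s3')" "q permutes UNIV" "evenperm q"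
    "s1' \<in> {1,-1}" "s2' \<in> {1,-1}" "s3' \<in> {1,-1}" using GsetE[OF b] by metis
  have "Tp p = Tp q" using ab ap bq rd_uvec rdv_permv_gbf by simp
  then have pq: "q = p" using Tp_inj by simp
  define z where "z = permv (inv p) y"
  have zZ: "Zv z" unfolding z_def using Zv_permv y(1) by blast
  have yz: "y = permv p z" unfolding z_def using permv_inv[OF ap(2)] by simp
  have zn: "rdv z \<noteq> zf" using y(2) rdv_permv_zf[OF ap(2), of z] yz by simp
  have ca: "(y \<bullet> a) / 2 \<in> Z" "(y \<bullet> b) / 2 \<in> Z" using C1(1) y a b by auto
  have da: "y \<bullet> a = z \<bullet> uvec s1 s2 s3" "y \<bullet> b = z \<bullet> uvec s1' s2' s3'"
    unfolding z_def ap(1) bq(1) pq using transport(1)[OF ap(2)] by auto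
  have t2: "y - c *\<^sub>R a = permv p (z - c *\<^sub>R uvec s1 s2 s3)" for c
    unfolding ap(1) z_def by (rule transport(2)[OF ap(2)])
  have t3: "y - c *\<^sub>R b = permv p (z - c *\<^sub>R uvec s1' s2' s3')" for c
    unfolding bq(1) pq z_def by (rule transport(2)[OF ap(2)])
  have za: "rdv (z - ((z \<bullet> uvec s1 s2 s3) / 2) *\<^sub>R uvec s1 s2 s3) = zf"
    using ra unfolding t2 da(1) rdv_permv_zf[OF ap(2)] .
  have zb: "rdv (z - ((z \<bullet> uvec s1' s2' s3') / 2) *\<^sub>R uvec s1' s2' s3') = zf"
    using rb unfolding t3 da(2) rdv_permv_zf[OF ap(2)] .
  have "uvec s1' s2' s3' = uvec s1 s2 s3 \<or> uvec s1' s2' s3' = - uvec s1 s2 s3"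
    using SL[OF zZ zn ap(4-6) bq(4-6) _ _ za zb] ca da by simp
  then show ?thesis unfolding ap(1) bq(1) pq by (auto simp: permv_minus)
qed

lemma E: assumes y: "Zv y" "rdv y = e" "e \<in> EvenT" and m: "m \<noteq> F0"
  shows "\<exists>a\<in>Gset. rdv a = vsm m e \<and> rdv (y - ((y \<bullet> a) / 2) *\<^sub>R a) = zf"
proof -
  have f: "vsm m e \<in> EvenT" using FA7 y(3) m by blast
  obtain p where p: "p permutes UNIV" "evenperm p" "Tp p = vsm m e" using P4e[OF f] by metis
  obtain l where l: "l \<noteq> F0" "fmul l m = F1" using Finv[OF m] by blast
  have ey: "rdv y = vsm l (Tp p)" unfolding p(3) vsm_vsm l(2) vsm_1 y(2) ..
  then have "rd (y $ j) = fmul l (gbf (p j))" for j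
  proof -
    have "rd (y $ 1) = fmul l (gbf (p 1))" "rd (y $ 2) = fmul l (gbf (p 2))"
      "rd (y $ 3) = fmul l (gbf (p 3))" "rd (y $ 4) = fmul l (gbf (p 4))"
      using ey unfolding rdv_def Tp_def by simp_all
    then show ?thesis using exhaust_4[of j] by auto
  qed
  define z where "z = permv (inv p) y"
  have zZ: "Zv z" unfolding z_def using Zv_permv y(1) by blast
  have yz: "y = permv p z" unfolding z_def using permv_inv[OF p(1)] by simp
  have zp: "z $ (p j) = y $ j" for j unfolding z_def using permutes_inverses(2)[OF p(1)] by simp
  have hj: "\<forall>j. rd (z $ (p j)) = fmul l (gbf (p j))" unfolding zp by (rule allI) fact
  have k: "\<forall>k. rd (z $ k) = fmul l (gbf k)"
    using perm_all[OF p(1), where P="\<lambda>k. rd (z $ k) = fmul l (gbf k)"] hj by blast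
  obtain s1 s2 s3 where s: "s1 \<in> {1,-1}" "s2 \<in> {1,-1}" "s3 \<in> {1,-1}" "(z \<bullet> uvec s1 s2 s3) / 2 \<in> Z"
    "rdv (z - ((z \<bullet> uvec s1 s2 s3) / 2) *\<^sub>R uvec s1 s2 s3) = zf" using SE[OF zZ l(1) k] by blast
  define a where "a = permv p (uvec s1 s2 s3)"
  have aG: "a \<in> Gset" unfolding a_def using Gset_I p s by blast
  have ra: "rdv a = vsm m e" unfolding a_def using rd_uvec[OF s(1-3)] rdv_permv_gbf p(3) by simp
  have da: "y \<bullet> a = z \<bullet> uvec s1 s2 s3" unfolding a_def z_def using transport(1)[OF p(1)] by simp
  have "y - ((y \<bullet> a) / 2) *\<^sub>R a = permv p (z - ((z \<bullet> uvec s1 s2 s3) / 2) *\<^sub>R uvec s1 s2 s3)"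
    unfolding da unfolding a_def z_def by (rule transport(2)[OF p(1)])
  then have "rdv (y - ((y \<bullet> a) / 2) *\<^sub>R a) = zf" using rdv_permv_zf[OF p(1)] s(5) by simp
  then show ?thesis using aG ra by blast
qed

lemma M_iff: assumes n: "n \<ge> 2" and x: "x \<in> Sdg n" and a: "a \<in> Gset"
  shows "reflect ((1/2) *\<^sub>R a) x \<in> Sdg' (n - 1) \<longleftrightarrow>
    rdv ((2 ^ n) *\<^sub>R x - (((2 ^ n) *\<^sub>R x \<bullet> a) / 2) *\<^sub>R a) = zf"
proof
  assume "reflect ((1/2) *\<^sub>R a) x \<in> Sdg' (n - 1)"
  then have z: "Zv ((2 ^ (n - 1)) *\<^sub>R reflect ((1/2) *\<^sub>R a) x)" unfolding Sdg'_iff by blast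
  obtain m where m: "n = m + 1" using n by (intro that[of "n - 1"]) simp
  have eq: "(2 ^ n) *\<^sub>R reflect ((1/2) *\<^sub>R a) x = 2 *\<^sub>R ((2 ^ (n - 1)) *\<^sub>R reflect ((1/2) *\<^sub>R a) x)"
    unfolding m by simp
  have "rdv ((2 ^ n) *\<^sub>R reflect ((1/2) *\<^sub>R a) x) = zf" unfolding eq by (rule rdv_2x[OF z])
  then show "rdv ((2 ^ n) *\<^sub>R x - (((2 ^ n) *\<^sub>R x \<bullet> a) / 2) *\<^sub>R a) = zf" unfolding refl_scaled .
next
  assume "rdv ((2 ^ n) *\<^sub>R x - (((2 ^ n) *\<^sub>R x \<bullet> a) / 2) *\<^sub>R a) = zf"
  then have "rdv ((2 ^ n) *\<^sub>R reflect ((1/2) *\<^sub>R a) x) = zf" unfolding refl_scaled .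
  then show "reflect ((1/2) *\<^sub>R a) x \<in> Sdg' (n - 1)" using partI_main[OF n Sdg_sub[OF x] a] by blast
qed

end



context gold begin

lemma refl_half_neg: "reflect ((1/2) *\<^sub>R (- a)) = reflect ((1/2) *\<^sub>R a)"
  using reflect_neg[of "(1/2) *\<^sub>R a"] by simp

lemma refl_eq_rdv: assumes "a \<in> Gset" "b \<in> Gset" "reflect ((1/2) *\<^sub>R a) = reflect ((1/2) *\<^sub>R b)"
  shows "rdv a = rdv b"
proof -
  have "(1/2) *\<^sub>R b = (1/2) *\<^sub>R a \<or> (1/2) *\<^sub>R b = - ((1/2) *\<^sub>R a)"
    using reflect_eq[OF half_unit[OF assms(1)] half_unit[OF assms(2)] assms(3)] .
  then have "b = a \<or> b = - a"
  proof
    assume h: "(1/2) *\<^sub>R b = (1/2) *\<^sub>R a"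
    show ?thesis using arg_cong[OF h, of "\<lambda>v. 2 *\<^sub>R v"] by simp
  next
    assume h: "(1/2) *\<^sub>R b = - ((1/2) *\<^sub>R a)"
    show ?thesis using arg_cong[OF h, of "\<lambda>v. 2 *\<^sub>R v"] by simp
  qed
  then show ?thesis using rdv_minus Gset_props(1)[OF assms(1)] by auto
qed

lemma partIII: assumes n: "n \<ge> 2" and x: "x \<in> Sdg n"
  shows "card {reflect \<alpha> | \<alpha>. \<alpha> \<in> Dg \<and> reflect \<alpha> x \<in> Sdg' (n - 1)} = 3"
proof -
  define y where "y = (2 ^ n) *\<^sub>R x"
  have hy: "Zv y" "x \<bullet> x = 1" "rdv y \<in> EvenT" using x unfolding Sdg_iff y_def by auto
  define e where "e = rdv y"
  have eA: "e \<in> Afin" "e \<noteq> zf" using FA6 hy(3) unfolding e_def by auto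
  define Q where "Q a \<longleftrightarrow> rdv (y - ((y \<bullet> a) / 2) *\<^sub>R a) = zf" for a
  have Pa: "((1/2) *\<^sub>R a \<in> Dg \<and> reflect ((1/2) *\<^sub>R a) x \<in> Sdg' (n - 1)) \<longleftrightarrow> Q a" if "a \<in> Gset" for a
    using Dg_char that M_iff[OF n x that] unfolding Q_def y_def by blast
  obtain a1 where a1: "a1 \<in> Gset" "rdv a1 = vsm F1 e" "Q a1"
    using E[OF hy(1) e_def[symmetric] hy(3)[folded e_def], of F1] unfolding Q_def by auto
  obtain a2 where a2: "a2 \<in> Gset" "rdv a2 = vsm FW e" "Q a2"
    using E[OF hy(1) e_def[symmetric] hy(3)[folded e_def], of FW] unfolding Q_def by auto
  obtain a3 where a3: "a3 \<in> Gset" "rdv a3 = vsm FV e" "Q a3"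
    using E[OF hy(1) e_def[symmetric] hy(3)[folded e_def], of FV] unfolding Q_def by auto
  have uni: "reflect ((1/2) *\<^sub>R a) = reflect ((1/2) *\<^sub>R b)" if "a \<in> Gset" "b \<in> Gset" "Q a" "Q b" "rdv a = rdv b" for a b
  proof -
    have "b = a \<or> b = - a" using U[OF hy(1) _ _ that(1,2)] that(3-5) eA unfolding Q_def e_def by blast
    then show ?thesis using refl_half_neg by auto
  qed
  have set: "{reflect \<alpha> | \<alpha>. \<alpha> \<in> Dg \<and> reflect \<alpha> x \<in> Sdg' (n - 1)} =
     {reflect ((1/2) *\<^sub>R a1), reflect ((1/2) *\<^sub>R a2), reflect ((1/2) *\<^sub>R a3)}"
  proof
    show "{reflect \<alpha> | \<alpha>. \<alpha> \<in> Dg \<and> reflect \<alpha> x \<in> Sdg' (n - 1)} \<subseteq>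
     {reflect ((1/2) *\<^sub>R a1), reflect ((1/2) *\<^sub>R a2), reflect ((1/2) *\<^sub>R a3)}"
    proof
      fix r assume "r \<in> {reflect \<alpha> | \<alpha>. \<alpha> \<in> Dg \<and> reflect \<alpha> x \<in> Sdg' (n - 1)}"
      then obtain \<alpha> where al: "\<alpha> \<in> Dg" "reflect \<alpha> x \<in> Sdg' (n - 1)" "r = reflect \<alpha>" by blast
      obtain a where a: "a \<in> Gset" "\<alpha> = (1/2) *\<^sub>R a" using Dg_char al(1) by blast
      have Qa: "Q a" using Pa[OF a(1)] al a by simp
      have "vadd e (vsm (rd ((y \<bullet> a) / 2)) (rdv a)) = zf"
        using Qa C1(3)[OF hy(1) _ a(1)] eA unfolding Q_def e_def by simp
      then have "rdv a = vsm F1 e \<or> rdv a = vsm FW e \<or> rdv a = vsm FV e"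
        using FA8 hy(3) Gset_props(2)[OF a(1)] unfolding e_def by blast
      then have "r = reflect ((1/2) *\<^sub>R a1) \<or> r = reflect ((1/2) *\<^sub>R a2) \<or> r = reflect ((1/2) *\<^sub>R a3)"
        using uni[OF a1(1) a(1) a1(3) Qa] uni[OF a2(1) a(1) a2(3) Qa] uni[OF a3(1) a(1) a3(3) Qa]
          a1(2) a2(2) a3(2) al(3) a(2) by auto
      then show "r \<in> {reflect ((1/2) *\<^sub>R a1), reflect ((1/2) *\<^sub>R a2), reflect ((1/2) *\<^sub>R a3)}" by blast
    qed
  next
    have "(1/2) *\<^sub>R a1 \<in> Dg \<and> reflect ((1/2) *\<^sub>R a1) x \<in> Sdg' (n - 1)" using Pa a1 by blast
    moreover have "(1/2) *\<^sub>R a2 \<in> Dg \<and> reflect ((1/2) *\<^sub>R a2) x \<in> Sdg' (n - 1)" using Pa a2 by blast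
    moreover have "(1/2) *\<^sub>R a3 \<in> Dg \<and> reflect ((1/2) *\<^sub>R a3) x \<in> Sdg' (n - 1)" using Pa a3 by blast
    ultimately show "{reflect ((1/2) *\<^sub>R a1), reflect ((1/2) *\<^sub>R a2), reflect ((1/2) *\<^sub>R a3)} \<subseteq>
      {reflect \<alpha> | \<alpha>. \<alpha> \<in> Dg \<and> reflect \<alpha> x \<in> Sdg' (n - 1)}" by blast
  qed
  have d: "vsm F1 e \<noteq> vsm FW e" "vsm F1 e \<noteq> vsm FV e" "vsm FW e \<noteq> vsm FV e"
    using FA9 hy(3) unfolding e_def by auto
  have "reflect ((1/2) *\<^sub>R a1) \<noteq> reflect ((1/2) *\<^sub>R a2)" using refl_eq_rdv[OF a1(1) a2(1)] a1(2) a2(2) d by auto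
  moreover have "reflect ((1/2) *\<^sub>R a1) \<noteq> reflect ((1/2) *\<^sub>R a3)" using refl_eq_rdv[OF a1(1) a3(1)] a1(2) a3(2) d by auto
  moreover have "reflect ((1/2) *\<^sub>R a2) \<noteq> reflect ((1/2) *\<^sub>R a3)" using refl_eq_rdv[OF a2(1) a3(1)] a2(2) a3(2) d by auto
  ultimately show ?thesis unfolding set by simp
qed

theorem main_g: assumes "n \<ge> 2"
  shows "(\<forall>\<alpha>\<in>Dg. reflect \<alpha> ` Sg n \<subseteq> Sg n \<union> Sdg' (n - 1))
       \<and> (\<forall>\<alpha>\<in>Dg. reflect \<alpha> ` (Sg n - Sdg n) \<subseteq> Sg n)
       \<and> (\<forall>x\<in>Sg n - Sdg n. \<exists>\<alpha>\<in>Dg. reflect \<alpha> x \<in> Sdg n)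
       \<and> (\<forall>x\<in>Sdg n. card {reflect \<alpha> | \<alpha>. \<alpha> \<in> Dg \<and> reflect \<alpha> x \<in> Sdg' (n - 1)} = 3)"
  using partI[OF assms] partIIa[OF assms] partIIb partIII[OF assms] by blast

end



lemma sqrt5: "sqrt 5 * sqrt 5 = (5::real)" by simp

lemma tau_sq: "tau * tau = tau + 1"
  unfolding tau_def by (simp add: field_simps sqrt5)
lemma tau'_sq: "tau' * tau' = tau' + 1"
  unfolding tau'_def by (simp add: field_simps sqrt5)
lemma tau'_eq: "tau' = 1 - tau" unfolding tau_def tau'_def by (simp add: field_simps)
lemma omt: "1 - tau = tau'" "1 - tau' = tau" unfolding tau_def tau'_def by (simp_all add: field_simps)

interpretation G1: gold tau by unfold_locales (rule tau_sq)
interpretation G2: gold tau' by unfold_locales (rule tau'_sq)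

lemma Z1: "G1.Z = ZT" unfolding G1.Z_def ZT_def ..
lemma Z2: "G2.Z = ZT"
proof
  show "G2.Z \<subseteq> ZT"
  proof
    fix r assume "r \<in> G2.Z"
    then obtain a b where "r = of_int a + of_int b * tau'" unfolding G2.Z_def by blast
    then have "r = of_int (a + b) + of_int (- b) * tau" unfolding tau'_eq by (simp add: algebra_simps)
    then show "r \<in> ZT" unfolding ZT_def by blast
  qed
  show "ZT \<subseteq> G2.Z"
  proof
    fix r assume "r \<in> ZT"
    then obtain a b where "r = of_int a + of_int b * tau" unfolding ZT_def by blast
    then have "r = of_int (a + b) + of_int (- b) * tau'" unfolding tau'_eq by (simp add: algebra_simps)
    then show "r \<in> G2.Z" unfolding G2.Z_def by blast
  qed
qed

lemma cong1: "G1.cong2g = cong2" unfolding G1.cong2g_def cong2_def Z1 by (intro ext) simp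
lemma cong2': "G2.cong2g = cong2" unfolding G2.cong2g_def cong2_def Z2 by (intro ext) simp
lemma ul1: "G1.unitlatg = unitlat" unfolding G1.unitlatg_def unitlat_def Z1 by (intro ext) simp
lemma ul2: "G2.unitlatg = unitlat" unfolding G2.unitlatg_def unitlat_def Z2 by (intro ext) simp
lemma reps1: "G1.repsg = F4reps" unfolding G1.repsg_def F4reps_def omt by auto
lemma reps2: "G2.repsg = F4reps" unfolding G2.repsg_def F4reps_def omt by auto
lemma gv1: "G1.gv = vector [0, 1, tau', tau]" unfolding G1.gv_def omt ..
lemma gv2: "G2.gv = vector [0, 1, tau, tau']" unfolding G2.gv_def omt ..

lemma swap_perm_set:
  fixes v :: "real^4"
  defines "sw \<equiv> Transposition.transpose (3::4) 4"
  shows "{permv p (permv sw v) | p. p \<in> evenperms} = {permv q v | q. q \<in> oddperms}"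
    "{permv p (permv sw v) | p. p \<in> oddperms} = {permv q v | q. q \<in> evenperms}"
proof -
  have sw: "sw permutes UNIV" "\<not> evenperm sw" "sw \<circ> sw = id" unfolding sw_def
    by (simp_all add: permutes_swap_id evenperm_swap)
  have pv: "permv p (permv sw v) = permv (sw \<circ> p) v" for p by (simp add: vec_eq_iff)
  have ps: "permutation sw" using permutes_imp_permutation[OF _ sw(1)] by simp
  have ev: "evenperm (sw \<circ> p) \<longleftrightarrow> \<not> evenperm p" if "p permutes UNIV" for p
  proof -
    have "permutation p" using permutes_imp_permutation[OF _ that] by simp
    then show ?thesis using evenperm_comp[OF ps] sw(2) by simp
  qed
  have cp: "sw \<circ> p permutes UNIV" if "p permutes UNIV" for p using permutes_compose[OF that sw(1)] .
  have inv: "sw \<circ> (sw \<circ> q) = q" for q using sw(3) by (simp add: o_assoc)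
  show "{permv p (permv sw v) | p. p \<in> evenperms} = {permv q v | q. q \<in> oddperms}"
  proof (intro equalityI subsetI)
    fix w assume "w \<in> {permv p (permv sw v) | p. p \<in> evenperms}"
    then obtain p where "p \<in> evenperms" "w = permv (sw \<circ> p) v" using pv by blast
    then show "w \<in> {permv q v | q. q \<in> oddperms}" unfolding evenperms_def oddperms_def using ev cp by blast
  next
    fix w assume "w \<in> {permv q v | q. q \<in> oddperms}"
    then obtain q where q: "q \<in> oddperms" "w = permv q v" by blast
    then have "w = permv (sw \<circ> q) (permv sw v)" unfolding pv inv by simp
    then show "w \<in> {permv p (permv sw v) | p. p \<in> evenperms}"
      using q(1) unfolding evenperms_def oddperms_def using ev cp by blast
  qed
  show "{permv p (permv sw v) | p. p \<in> oddperms} = {permv q v | q. q \<in> evenperms}"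
  proof (intro equalityI subsetI)
    fix w assume "w \<in> {permv p (permv sw v) | p. p \<in> oddperms}"
    then obtain p where "p \<in> oddperms" "w = permv (sw \<circ> p) v" using pv by blast
    then show "w \<in> {permv q v | q. q \<in> evenperms}" unfolding evenperms_def oddperms_def using ev cp by blast
  next
    fix w assume "w \<in> {permv q v | q. q \<in> evenperms}"
    then obtain q where q: "q \<in> evenperms" "w = permv q v" by blast
    then have "w = permv (sw \<circ> q) (permv sw v)" unfolding pv inv by simp
    then show "w \<in> {permv p (permv sw v) | p. p \<in> oddperms}"
      using q(1) unfolding evenperms_def oddperms_def using ev cp by blast
  qed
qed

lemma gv2_sw: "G2.gv = permv (Transposition.transpose (3::4) 4) (vector [0, 1, tau', tau])"
  unfolding gv2 by (simp add: vec_eq_iff forall_4 Transposition.transpose_def)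

lemma eqS1: "G1.Sg = S" unfolding G1.Sg_def S_def ul1 G1.rinz_def red_in_nonzero_def cong1
  G1.spanrepg_def spanrep_def reps1 Arep_def gv1 by (intro ext) simp
lemma eqS2: "G2.Sg = S'" unfolding G2.Sg_def S'_def ul2 G2.rinz_def red_in_nonzero_def cong2'
  G2.spanrepg_def spanrep_def reps2 Arep'_def gv2 by (intro ext) simp
lemma eqSd1: "G1.Sdg = Sdot" unfolding G1.Sdg_def Sdot_def ul1 G1.rin_def red_in_def cong1
  Adotrep_def gv1 by (intro ext) simp
lemma eqSd1': "G1.Sdg' = Sdot'" unfolding G1.Sdg'_def Sdot'_def ul1 G1.rin_def red_in_def cong1
  Adotrep'_def gv1 by (intro ext) simp
lemma eqSd2: "G2.Sdg = Sdot'" unfolding G2.Sdg_def Sdot'_def ul2 G2.rin_def red_in_def cong2'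
  Adotrep'_def gv2_sw swap_perm_set by (intro ext) simp
lemma eqSd2': "G2.Sdg' = Sdot" unfolding G2.Sdg'_def Sdot_def ul2 G2.rin_def red_in_def cong2'
  Adotrep_def gv2_sw swap_perm_set by (intro ext) simp
lemma eqD1: "G1.Dg = Deltadot" unfolding G1.Dg_def Deltadot_def Kset_def Delta_def Delta'_def omt ..
lemma eqD2: "G2.Dg = Deltadot'" unfolding G2.Dg_def Deltadot'_def Kset_def Delta_def Delta'_def omt
  by (simp add: Int_commute)

theorem mainTheorem5:
  fixes n :: nat
  assumes "n \<ge> 2"
  shows "(\<forall>\<alpha>\<in>Deltadot. reflect \<alpha> ` S n \<subseteq> S n \<union> Sdot' (n - 1))
       \<and> (\<forall>\<alpha>\<in>Deltadot. reflect \<alpha> ` (S n - Sdot n) \<subseteq> S n)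
       \<and> (\<forall>x\<in>S n - Sdot n. \<exists>\<alpha>\<in>Deltadot. reflect \<alpha> x \<in> Sdot n)
       \<and> (\<forall>x\<in>Sdot n. card {reflect \<alpha> | \<alpha>. \<alpha> \<in> Deltadot \<and> reflect \<alpha> x \<in> Sdot' (n - 1)} = 3)
       \<and> (\<forall>\<alpha>\<in>Deltadot'. reflect \<alpha> ` S' n \<subseteq> S' n \<union> Sdot (n - 1))
       \<and> (\<forall>\<alpha>\<in>Deltadot'. reflect \<alpha> ` (S' n - Sdot' n) \<subseteq> S' n)
       \<and> (\<forall>x\<in>S' n - Sdot' n. \<exists>\<alpha>\<in>Deltadot'. reflect \<alpha> x \<in> Sdot' n)
       \<and> (\<forall>x\<in>Sdot' n. card {reflect \<alpha> | \<alpha>. \<alpha> \<in> Deltadot' \<and> reflect \<alpha> x \<in> Sdot (n - 1)} = 3)"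
proof -
  note h1 = G1.main_g[OF assms, unfolded eqS1 eqSd1 eqSd1' eqD1]
  note h2 = G2.main_g[OF assms, unfolded eqS2 eqSd2 eqSd2' eqD2]
  show ?thesis using conjI[OF h1 h2] unfolding conj_assoc .
qed



end
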